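(* Let $\rho>0$, $v\in[0,1]$, $(l,m,n)\in\mathbb{Z}_+^3\setminus\{\mathbf 0\}$, $t\ge0$ and $p,q,g\in[0,1]$. Then $\mathbb{E}_{l,m,n,0}[p^{a(t)}q^{b(t)}g^{c(t)}v^{s(t)}]=\mathbb{E}_{l,m,n,0}\Bigl[p^{a_v(t)}q^{b_v(t)}g^{c_v(t)}\exp\Bigl\{-\frac{\rho(1-v)}{2}\int_0^t c_v(u)\,du\Bigr\}\Bigr]$.
   Context: The ancestral chain $(a(t),b(t),c(t))$ with parameter $\rho$ is the continuous-time Markov chain on $\mathbb{Z}_+^3\setminus\{\mathbf 0\}$ which from $(a,b,c)$ jumps to $(a+1,b+1,c-1)$ at rate $c\rho/2$ (a recombination event), to $(a-1,b-1,c+1)$ at rate $ab$, to $(a-1,b,c)$ at rate $ac+a(a-1)/2$, to $(a,b-1,c)$ at rate $bc+b(b-1)/2$, and to $(a,b,c-1)$ at rate $c(c-1)/2$. $s(t)$ is the number of recombination jumps (jumps of type $(a,b,c)\to(a+1,b+1,c-1)$) in the time interval $(0,t)$, and $\mathbb{E}_{l,m,n,0}$ denotes expectation with $(a(0),b(0),c(0))=(l,m,n)$, $s(0)=0$. $(a_v(t),b_v(t),c_v(t))$ denotes the same chain with $\rho$ replaced by $v\rho$ (recombination fraction $r$ replaced by $rv$), started at $(l,m,n)$. *)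

theory Defs
  imports "HOL-Probability.Probability"
begin

type_synonym anc_state = "nat \<times> nat \<times> nat"

text \<open>The possible transitions from (a,b,c) with parameter rho, as a list of
  (rate, target state, is-a-recombination-jump).  Targets with nat
  subtraction only matter when their rate is positive.\<close>
definition anc_moves :: "real \<Rightarrow> anc_state \<Rightarrow> (real \<times> anc_state \<times> bool) list" where
  "anc_moves \<rho> x = (case x of (a, b, c) \<Rightarrow>
     [ (real c * \<rho> / 2,                                (a + 1, b + 1, c - 1), True),
       (real a * real b,                                (a - 1, b - 1, c + 1), False),
       (real a * real c + real a * (real a - 1) / 2,    (a - 1, b, c),         False),
       (real b * real c + real b * (real b - 1) / 2,    (a, b - 1, c),         False),
       (real c * (real c - 1) / 2,                      (a, b, c - 1),         False) ])"

definition anc_total_rate :: "real \<Rightarrow> anc_state \<Rightarrow> real" where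
  "anc_total_rate \<rho> x = (\<Sum>i<length (anc_moves \<rho> x). fst (anc_moves \<rho> x ! i))"

definition anc_cum :: "real \<Rightarrow> anc_state \<Rightarrow> nat \<Rightarrow> real" where
  "anc_cum \<rho> x i = (\<Sum>j<i. fst (anc_moves \<rho> x ! j))"

text \<open>One step of the jump chain driven by a pair (U, E) with U uniform on [0,1]
  and E standard exponential: the next move is move i with probability
  rate_i / total, the holding time is E / total.  If the total rate is 0 the
  state is absorbing; we then make a dummy self-transition (no recombination),
  which does not change the process.\<close>
definition anc_step :: "real \<Rightarrow> anc_state \<Rightarrow> real \<times> real \<Rightarrow> anc_state \<times> real \<times> bool" where
  "anc_step \<rho> x ue = (let (u, e) = ue; Q = anc_total_rate \<rho> x; ms = anc_moves \<rho> x in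
     if Q \<le> 0 then (x, e, False)
     else if (\<exists>i<length ms. u * Q < anc_cum \<rho> x (Suc i))
       then (let i = (LEAST i. i < length ms \<and> u * Q < anc_cum \<rho> x (Suc i))
             in (fst (snd (ms ! i)), e / Q, snd (snd (ms ! i))))
       else (x, e / Q, False))"

definition anc_noise :: "(real \<times> real) measure" where
  "anc_noise = uniform_measure lborel {0..1} \<Otimes>\<^sub>M density lborel (exponential_density 1)"

definition anc_Omega :: "(nat \<Rightarrow> real \<times> real) measure" where
  "anc_Omega = PiM UNIV (\<lambda>_. anc_noise)"

fun anc_path :: "real \<Rightarrow> anc_state \<Rightarrow> (nat \<Rightarrow> real \<times> real) \<Rightarrow> nat \<Rightarrow> anc_state" where
  "anc_path \<rho> x0 \<omega> 0 = x0"
| "anc_path \<rho> x0 \<omega> (Suc k) = fst (anc_step \<rho> (anc_path \<rho> x0 \<omega> k) (\<omega> k))"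

definition anc_hold :: "real \<Rightarrow> anc_state \<Rightarrow> (nat \<Rightarrow> real \<times> real) \<Rightarrow> nat \<Rightarrow> real" where
  "anc_hold \<rho> x0 \<omega> k = fst (snd (anc_step \<rho> (anc_path \<rho> x0 \<omega> k) (\<omega> k)))"

definition anc_recomb :: "real \<Rightarrow> anc_state \<Rightarrow> (nat \<Rightarrow> real \<times> real) \<Rightarrow> nat \<Rightarrow> bool" where
  "anc_recomb \<rho> x0 \<omega> k = snd (snd (anc_step \<rho> (anc_path \<rho> x0 \<omega> k) (\<omega> k)))"

definition anc_jtime :: "real \<Rightarrow> anc_state \<Rightarrow> (nat \<Rightarrow> real \<times> real) \<Rightarrow> nat \<Rightarrow> real" where
  "anc_jtime \<rho> x0 \<omega> k = (\<Sum>i<k. anc_hold \<rho> x0 \<omega> i)"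

text \<open>Number of jumps that occurred up to time t (index of the current state).
  (On the null event of explosion this is arbitrary.)\<close>
definition anc_index :: "real \<Rightarrow> anc_state \<Rightarrow> (nat \<Rightarrow> real \<times> real) \<Rightarrow> real \<Rightarrow> nat" where
  "anc_index \<rho> x0 \<omega> t = (LEAST k. t < anc_jtime \<rho> x0 \<omega> (Suc k))"

definition anc_chain :: "real \<Rightarrow> anc_state \<Rightarrow> (nat \<Rightarrow> real \<times> real) \<Rightarrow> real \<Rightarrow> anc_state" where
  "anc_chain \<rho> x0 \<omega> t = anc_path \<rho> x0 \<omega> (anc_index \<rho> x0 \<omega> t)"

definition anc_a :: "real \<Rightarrow> anc_state \<Rightarrow> (nat \<Rightarrow> real \<times> real) \<Rightarrow> real \<Rightarrow> nat" where
  "anc_a \<rho> x0 \<omega> t = fst (anc_chain \<rho> x0 \<omega> t)"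
definition anc_b :: "real \<Rightarrow> anc_state \<Rightarrow> (nat \<Rightarrow> real \<times> real) \<Rightarrow> real \<Rightarrow> nat" where
  "anc_b \<rho> x0 \<omega> t = fst (snd (anc_chain \<rho> x0 \<omega> t))"
definition anc_c :: "real \<Rightarrow> anc_state \<Rightarrow> (nat \<Rightarrow> real \<times> real) \<Rightarrow> real \<Rightarrow> nat" where
  "anc_c \<rho> x0 \<omega> t = snd (snd (anc_chain \<rho> x0 \<omega> t))"

definition anc_s :: "real \<Rightarrow> anc_state \<Rightarrow> (nat \<Rightarrow> real \<times> real) \<Rightarrow> real \<Rightarrow> nat" where
  "anc_s \<rho> x0 \<omega> t = card {k. k < anc_index \<rho> x0 \<omega> t \<and> anc_recomb \<rho> x0 \<omega> k}"

end

theory Submission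
  imports Defs
begin

lemma length_moves[simp]: "length (anc_moves r x) = 5"
  by (simp add: anc_moves_def split: prod.splits)

definition ach :: "real \<Rightarrow> anc_state \<Rightarrow> real \<Rightarrow> nat" where
  "ach r x u = (if anc_total_rate r x \<le> 0 then 5 else
     if (\<exists>i<5. u * anc_total_rate r x < anc_cum r x (Suc i))
     then (LEAST i. i < 5 \<and> u * anc_total_rate r x < anc_cum r x (Suc i)) else 5)"

lemma ach_meas[measurable]: "ach r x \<in> borel \<rightarrow>\<^sub>M count_space UNIV"
  unfolding ach_def by measurable

lemma step_alt: "anc_step r x (u, e) = (let i = ach r x u in if i < 5 then
   (fst (snd (anc_moves r x ! i)), e / anc_total_rate r x, snd (snd (anc_moves r x ! i)))
   else (x, if anc_total_rate r x \<le> 0 then e else e / anc_total_rate r x, False))"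
proof -
  have L: "(\<exists>i<5. u * anc_total_rate r x < anc_cum r x (Suc i)) \<Longrightarrow>
     (LEAST i. i < 5 \<and> u * anc_total_rate r x < anc_cum r x (Suc i)) < 5"
    by (metis (mono_tags, lifting) LeastI_ex)
  show ?thesis unfolding anc_step_def ach_def Let_def using L by auto
qed

lemma anc_step_meas[measurable]:
  "anc_step r x \<in> measurable (borel \<Otimes>\<^sub>M borel) (count_space UNIV \<Otimes>\<^sub>M borel \<Otimes>\<^sub>M count_space UNIV)"
proof -
  have e: "anc_step r x = (\<lambda>z. (\<lambda>i z. if i < 5 then
   (fst (snd (anc_moves r x ! i)), snd z / anc_total_rate r x, snd (snd (anc_moves r x ! i)))
   else (x, if anc_total_rate r x \<le> 0 then snd z else snd z / anc_total_rate r x, False)) (ach r x (fst z)) z)"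
    by (auto simp: step_alt Let_def fun_eq_iff)
  show ?thesis unfolding e
    by (rule measurable_compose_countable[where g="\<lambda>z. ach r x (fst z)"]) measurable
qed

lemma sets_noise: "sets anc_noise = sets (borel \<Otimes>\<^sub>M borel)"
  unfolding anc_noise_def by (intro sets_pair_measure_cong) auto

lemma space_noise: "space anc_noise = UNIV"
  using sets_eq_imp_space_eq[OF sets_noise] by (simp add: space_pair_measure)

lemma space_Omega: "space anc_Omega = UNIV"
  unfolding anc_Omega_def by (simp add: space_PiM space_noise)

lemma step_meas_noise[measurable]:
  "anc_step r x \<in> anc_noise \<rightarrow>\<^sub>M (count_space UNIV \<Otimes>\<^sub>M borel \<Otimes>\<^sub>M count_space UNIV)"
  using anc_step_meas measurable_cong_sets[OF sets_noise refl] by blast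

lemma comp_meas[measurable]: "(\<lambda>\<omega>. \<omega> k) \<in> anc_Omega \<rightarrow>\<^sub>M anc_noise"
  unfolding anc_Omega_def by (rule measurable_component_singleton) simp

lemma path_meas[measurable]: "(\<lambda>\<omega>. anc_path r x \<omega> k) \<in> anc_Omega \<rightarrow>\<^sub>M count_space UNIV"
proof (induction k)
  case 0 then show ?case by simp
next
  case (Suc k)
  have "(\<lambda>\<omega>. (\<lambda>i \<omega>. fst (anc_step r i (\<omega> k))) (anc_path r x \<omega> k) \<omega>) \<in> anc_Omega \<rightarrow>\<^sub>M count_space UNIV"
    by (rule measurable_compose_countable[OF _ Suc]) measurable
  then show ?case by simp
qed

lemma step_comp_meas[measurable]:
  "(\<lambda>\<omega>. anc_step r (anc_path r x \<omega> k) (\<omega> k)) \<in> anc_Omega \<rightarrow>\<^sub>M (count_space UNIV \<Otimes>\<^sub>M borel \<Otimes>\<^sub>M count_space UNIV)"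
  by (rule measurable_compose_countable[OF _ path_meas]) measurable

lemma hold_meas[measurable]: "(\<lambda>\<omega>. anc_hold r x \<omega> k) \<in> borel_measurable anc_Omega"
  unfolding anc_hold_def by measurable

lemma recomb_meas[measurable]: "(\<lambda>\<omega>. anc_recomb r x \<omega> k) \<in> anc_Omega \<rightarrow>\<^sub>M count_space UNIV"
  unfolding anc_recomb_def by measurable

lemma jtime_meas[measurable]: "(\<lambda>\<omega>. anc_jtime r x \<omega> k) \<in> borel_measurable anc_Omega"
  unfolding anc_jtime_def by measurable

abbreviation sh :: "(nat \<Rightarrow> 'a) \<Rightarrow> nat \<Rightarrow> 'a" where "sh \<omega> \<equiv> (\<lambda>i. \<omega> (Suc i))"

lemma path_Suc_shift:
  "anc_path r x \<omega> (Suc k) = anc_path r (fst (anc_step r x (\<omega> 0))) (sh \<omega>) k"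
  by (induction k) auto

lemma hold_Suc_shift:
  "anc_hold r x \<omega> (Suc k) = anc_hold r (fst (anc_step r x (\<omega> 0))) (sh \<omega>) k"
  unfolding anc_hold_def path_Suc_shift by simp

lemma recomb_Suc_shift:
  "anc_recomb r x \<omega> (Suc k) = anc_recomb r (fst (anc_step r x (\<omega> 0))) (sh \<omega>) k"
  unfolding anc_recomb_def path_Suc_shift by simp

lemma hold_0: "anc_hold r x \<omega> 0 = fst (snd (anc_step r x (\<omega> 0)))"
  unfolding anc_hold_def by simp

lemma recomb_0: "anc_recomb r x \<omega> 0 = snd (snd (anc_step r x (\<omega> 0)))"
  unfolding anc_recomb_def by simp

lemma jtime_Suc_shift:
  "anc_jtime r x \<omega> (Suc k) = fst (snd (anc_step r x (\<omega> 0))) + anc_jtime r (fst (anc_step r x (\<omega> 0))) (sh \<omega>) k"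
  unfolding anc_jtime_def sum.lessThan_Suc_shift hold_Suc_shift hold_0 by simp

lemma card_Suc_filter:
  "card {k. k < Suc n \<and> P k} = (if P 0 then 1 else 0) + card {k. k < n \<and> P (Suc k)}"
proof -
  have e: "{k. k < Suc n \<and> P k} = (if P 0 then insert 0 else id) (Suc ` {k. k < n \<and> P (Suc k)})"
    by (auto simp: image_iff less_Suc_eq_0_disj)
  have f: "finite (Suc ` {k. k < n \<and> P (Suc k)})" by auto
  have c: "card (Suc ` {k. k < n \<and> P (Suc k)}) = card {k. k < n \<and> P (Suc k)}"
    by (rule card_image) simp
  show ?thesis unfolding e using f c by auto
qed

context
  fixes r :: real and x :: anc_state and \<omega> :: "nat \<Rightarrow> real \<times> real"
begin

lemma index_lt: "t < fst (snd (anc_step r x (\<omega> 0))) \<Longrightarrow> anc_index r x \<omega> t = 0"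
  unfolding anc_index_def using jtime_Suc_shift[of r x \<omega> 0]
  by (intro Least_equality) (auto simp: anc_jtime_def)

lemma index_ge:
  assumes "fst (snd (anc_step r x (\<omega> 0))) \<le> t"
    and "\<exists>k. t - fst (snd (anc_step r x (\<omega> 0))) < anc_jtime r (fst (anc_step r x (\<omega> 0))) (sh \<omega>) (Suc k)"
  shows "anc_index r x \<omega> t = Suc (anc_index r (fst (anc_step r x (\<omega> 0))) (sh \<omega>) (t - fst (snd (anc_step r x (\<omega> 0)))))"
proof -
  obtain k where k: "t - fst (snd (anc_step r x (\<omega> 0))) < anc_jtime r (fst (anc_step r x (\<omega> 0))) (sh \<omega>) (Suc k)"
    using assms(2) by blast
  have P: "t < anc_jtime r x \<omega> (Suc (Suc k))" using k jtime_Suc_shift[of r x \<omega> "Suc k"] by simp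
  have P0: "\<not> t < anc_jtime r x \<omega> (Suc 0)" using assms(1) jtime_Suc_shift[of r x \<omega> 0]
    by (simp add: anc_jtime_def)
  show ?thesis unfolding anc_index_def
    apply (subst Least_Suc[OF P P0])
    apply (simp add: jtime_Suc_shift[of r x \<omega> "Suc _"])
    by (simp add: diff_less_eq add.commute)
qed

lemma chain_lt: "t < fst (snd (anc_step r x (\<omega> 0))) \<Longrightarrow> anc_chain r x \<omega> t = x"
  unfolding anc_chain_def by (simp add: index_lt)

lemma s_lt: "t < fst (snd (anc_step r x (\<omega> 0))) \<Longrightarrow> anc_s r x \<omega> t = 0"
  unfolding anc_s_def by (simp add: index_lt)

lemma chain_ge:
  assumes "fst (snd (anc_step r x (\<omega> 0))) \<le> t"
    and "\<exists>k. t - fst (snd (anc_step r x (\<omega> 0))) < anc_jtime r (fst (anc_step r x (\<omega> 0))) (sh \<omega>) (Suc k)"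
  shows "anc_chain r x \<omega> t = anc_chain r (fst (anc_step r x (\<omega> 0))) (sh \<omega>) (t - fst (snd (anc_step r x (\<omega> 0))))"
  unfolding anc_chain_def index_ge[OF assms] path_Suc_shift ..

lemma s_ge:
  assumes "fst (snd (anc_step r x (\<omega> 0))) \<le> t"
    and "\<exists>k. t - fst (snd (anc_step r x (\<omega> 0))) < anc_jtime r (fst (anc_step r x (\<omega> 0))) (sh \<omega>) (Suc k)"
  shows "anc_s r x \<omega> t = (if snd (snd (anc_step r x (\<omega> 0))) then 1 else 0) +
     anc_s r (fst (anc_step r x (\<omega> 0))) (sh \<omega>) (t - fst (snd (anc_step r x (\<omega> 0))))"
  unfolding anc_s_def index_ge[OF assms] card_Suc_filter recomb_Suc_shift recomb_0 ..

end

lemma index_mono: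
  assumes "u \<le> t" "\<exists>k. t < anc_jtime r x \<omega> (Suc k)"
  shows "anc_index r x \<omega> u \<le> anc_index r x \<omega> t"
proof -
  have "t < anc_jtime r x \<omega> (Suc (anc_index r x \<omega> t))"
    unfolding anc_index_def using assms(2) by (rule LeastI_ex)
  then have "u < anc_jtime r x \<omega> (Suc (anc_index r x \<omega> t))" using assms(1) by simp
  then show ?thesis unfolding anc_index_def by (rule Least_le)
qed

abbreviation "Unif \<equiv> uniform_measure lborel {0..1::real}"
abbreviation "Expo \<equiv> density lborel (exponential_density 1)"

lemma prob_Unif: "prob_space Unif"
  by (rule prob_space_uniform_measure) auto

lemma prob_Expo: "prob_space Expo"
  by (rule prob_space_exponential_density) simp

lemma prob_noise: "prob_space anc_noise"
  unfolding anc_noise_def by (intro prob_space_pair prob_Unif prob_Expo)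

interpretation Noise: prob_space anc_noise by (rule prob_noise)

interpretation Seq: sequence_space anc_noise
  by unfold_locales

lemma Omega_eq: "anc_Omega = Seq.S" unfolding anc_Omega_def ..

lemma prob_Omega: "prob_space anc_Omega" unfolding Omega_eq by (rule Seq.P.prob_space_axioms)

interpretation Om: prob_space anc_Omega by (rule prob_Omega)

lemma rate_nonneg:
  assumes "0 \<le> r" "i < 5"
  shows "0 \<le> fst (anc_moves r x ! i)"
proof -
  obtain a b c where x: "x = (a, b, c)" by (cases x) auto
  have h: "0 \<le> real k * (real k - 1)" for k :: nat by (cases k) auto
  from assms(2) have "i = 0 \<or> i = 1 \<or> i = 2 \<or> i = 3 \<or> i = 4" by auto
  then show ?thesis using assms(1) h[of a] h[of b] h[of c]
    by (auto simp: x anc_moves_def intro!: add_nonneg_nonneg)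
qed

lemma total_eq_cum: "anc_total_rate r x = anc_cum r x 5"
  unfolding anc_total_rate_def anc_cum_def by simp

lemma cum_mono: "0 \<le> r \<Longrightarrow> i \<le> j \<Longrightarrow> j \<le> 5 \<Longrightarrow> anc_cum r x i \<le> anc_cum r x j"
  unfolding anc_cum_def by (intro sum_mono2) (auto intro: rate_nonneg)

lemma cum_Suc: "anc_cum r x (Suc i) = anc_cum r x i + fst (anc_moves r x ! i)"
  unfolding anc_cum_def by simp

lemma ach_iff:
  assumes r: "0 \<le> r" and Q: "0 < anc_total_rate r x" and u: "0 \<le> u" "u < 1"
  shows "ach r x u = i \<longleftrightarrow> i < 5 \<and> anc_cum r x i \<le> u * anc_total_rate r x \<and> u * anc_total_rate r x < anc_cum r x (Suc i)"
proof -
  let ?Q = "anc_total_rate r x" and ?w = "u * anc_total_rate r x"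
  have w: "?w < anc_cum r x (Suc 4)" using u Q total_eq_cum[of r x] by (simp add: mult_less_cancel_right2 eval_nat_numeral)
  have ex: "\<exists>i<5. ?w < anc_cum r x (Suc i)" using w by (intro exI[of _ 4]) auto
  have a: "ach r x u = (LEAST i. i < 5 \<and> ?w < anc_cum r x (Suc i))" using ex Q by (simp add: ach_def)
  show ?thesis
  proof
    assume e: "ach r x u = i"
    have L: "i < 5 \<and> ?w < anc_cum r x (Suc i)" using LeastI_ex[of "\<lambda>i. i < 5 \<and> ?w < anc_cum r x (Suc i)"] ex e a by auto
    have "anc_cum r x i \<le> ?w"
    proof (cases i)
      case 0 then show ?thesis using u Q by (simp add: anc_cum_def)
    next
      case (Suc j)
      have "\<not> (j < 5 \<and> ?w < anc_cum r x (Suc j))"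
        using not_less_Least[of j "\<lambda>i. i < 5 \<and> ?w < anc_cum r x (Suc i)"] e a Suc by auto
      then show ?thesis using Suc L by auto
    qed
    then show "i < 5 \<and> anc_cum r x i \<le> ?w \<and> ?w < anc_cum r x (Suc i)" using L by auto
  next
    assume i: "i < 5 \<and> anc_cum r x i \<le> ?w \<and> ?w < anc_cum r x (Suc i)"
    show "ach r x u = i" unfolding a
    proof (rule Least_equality)
      show "i < 5 \<and> ?w < anc_cum r x (Suc i)" using i by auto
      fix j assume j: "j < 5 \<and> ?w < anc_cum r x (Suc j)"
      show "i \<le> j"
      proof (rule ccontr)
        assume "\<not> i \<le> j"
        then have "anc_cum r x (Suc j) \<le> anc_cum r x i" using i by (intro cum_mono[OF r]) auto
        then show False using i j by auto
      qed
    qed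
  qed
qed

lemma ach_set:
  assumes r: "0 \<le> r" and Q: "0 < anc_total_rate r x" and i: "i < 5"
  shows "{u. ach r x u = i} \<inter> {0..1} = {anc_cum r x i / anc_total_rate r x ..< anc_cum r x (Suc i) / anc_total_rate r x}"
proof -
  let ?Q = "anc_total_rate r x"
  have c0: "0 \<le> anc_cum r x i" using cum_mono[OF r, of 0 i x] i by (simp add: anc_cum_def)
  have c5: "anc_cum r x (Suc i) \<le> ?Q" using cum_mono[OF r, of "Suc i" 5 x] i total_eq_cum[of r x] by simp
  have one: "ach r x 1 \<noteq> i"
  proof -
    have "\<forall>j<5. anc_cum r x (Suc j) \<le> ?Q"
      using cum_mono[OF r, of "Suc _" 5 x] total_eq_cum[of r x] by auto
    then have "\<not> (\<exists>i<5. 1 * ?Q < anc_cum r x (Suc i))"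
      by (auto simp: not_less)
    then show ?thesis using Q i unfolding ach_def by auto
  qed
  show ?thesis
  proof (intro set_eqI iffI)
    fix u assume u: "u \<in> {u. ach r x u = i} \<inter> {0..1}"
    then have "u \<noteq> 1" using one by auto
    with u have "0 \<le> u" "u < 1" by auto
    then show "u \<in> {anc_cum r x i / ?Q ..< anc_cum r x (Suc i) / ?Q}"
      using u ach_iff[OF r Q, of u i] Q by (auto simp: divide_simps mult.commute)
  next
    fix u assume u: "u \<in> {anc_cum r x i / ?Q ..< anc_cum r x (Suc i) / ?Q}"
    then have w: "anc_cum r x i \<le> u * ?Q" "u * ?Q < anc_cum r x (Suc i)" using Q by (auto simp: divide_simps)
    have "0 \<le> u * ?Q" using w(1) c0 by linarith
    then have "0 \<le> u" using Q by (simp add: zero_le_mult_iff)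
    moreover have "u * ?Q < 1 * ?Q" using w(2) c5 by simp
    then have "u < 1" using Q by (simp add: mult_less_cancel_right)
    ultimately show "u \<in> {u. ach r x u = i} \<inter> {0..1}"
      using u ach_iff[OF r Q, of u i] Q i by (auto simp: divide_simps mult.commute)
  qed
qed

lemma emeasure_ach:
  assumes r: "0 \<le> r" and Q: "0 < anc_total_rate r x" and i: "i < 5"
  shows "emeasure Unif {u. ach r x u = i} = ennreal (fst (anc_moves r x ! i) / anc_total_rate r x)"
proof -
  have m: "{u. ach r x u = i} \<in> sets borel"
    using ach_meas[of r x] by (simp add: measurable_count_space_eq2_countable vimage_def Collect_conj_eq)
  have "emeasure Unif {u. ach r x u = i} = emeasure lborel ({0..1} \<inter> {u. ach r x u = i})"
    using m by (simp add: divide_ennreal_def)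
  also have "{0..1} \<inter> {u. ach r x u = i} = {anc_cum r x i / anc_total_rate r x ..< anc_cum r x (Suc i) / anc_total_rate r x}"
    using ach_set[OF assms] by blast
  also have "emeasure lborel \<dots> = ennreal (anc_cum r x (Suc i) / anc_total_rate r x - anc_cum r x i / anc_total_rate r x)"
    using cum_mono[OF r, of i "Suc i" x] i Q by (auto simp: divide_right_mono)
  also have "\<dots> = ennreal (fst (anc_moves r x ! i) / anc_total_rate r x)"
    by (simp add: cum_Suc add_divide_distrib)
  finally show ?thesis .
qed

lemma Expo_affine:
  fixes g :: "real \<Rightarrow> ennreal"
  assumes Q: "0 < Q" and g[measurable]: "g \<in> borel_measurable borel"
  shows "(\<integral>\<^sup>+e. g (e / Q) \<partial>Expo) = ennreal Q * (\<integral>\<^sup>+h. indicator {0..} h * ennreal (exp (- Q * h)) * g h \<partial>lborel)"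
proof -
  have "(\<integral>\<^sup>+e. g (e / Q) \<partial>Expo) = (\<integral>\<^sup>+e. ennreal (exponential_density 1 e) * g (e / Q) \<partial>lborel)"
    by (subst nn_integral_density) auto
  also have "\<dots> = ennreal \<bar>Q\<bar> * (\<integral>\<^sup>+h. ennreal (exponential_density 1 (0 + Q * h)) * g ((0 + Q * h) / Q) \<partial>lborel)"
    using Q by (intro nn_integral_real_affine) auto
  also have "(\<lambda>h. ennreal (exponential_density 1 (0 + Q * h)) * g ((0 + Q * h) / Q)) =
      (\<lambda>h. indicator {0..} h * ennreal (exp (- Q * h)) * g h)"
    using Q by (auto simp: fun_eq_iff exponential_density_def indicator_def zero_le_mult_iff not_less mult.commute mult_less_0_iff)
  finally show ?thesis using Q by simp
qed

lemma step_meas_pair[measurable]: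
  "anc_step r x \<in> (Unif \<Otimes>\<^sub>M Expo) \<rightarrow>\<^sub>M (count_space UNIV \<Otimes>\<^sub>M borel \<Otimes>\<^sub>M count_space UNIV)"
  using step_meas_noise unfolding anc_noise_def .

lemma ach_lt5:
  assumes r: "0 \<le> r" and Q: "0 < anc_total_rate r x" and u: "0 \<le> u" "u < 1"
  shows "ach r x u < 5"
  using ach_iff[OF r Q u, of "ach r x u"] by simp

lemma kernel:
  fixes g :: "anc_state \<times> real \<times> bool \<Rightarrow> ennreal"
  assumes r: "0 \<le> r" and Q: "0 < anc_total_rate r x"
    and g[measurable]: "g \<in> borel_measurable (count_space UNIV \<Otimes>\<^sub>M borel \<Otimes>\<^sub>M count_space UNIV)"
  shows "(\<integral>\<^sup>+z. g (anc_step r x z) \<partial>anc_noise) =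
    (\<Sum>i<5. ennreal (fst (anc_moves r x ! i)) * (\<integral>\<^sup>+h. indicator {0..} h * ennreal (exp (- anc_total_rate r x * h))
        * g (fst (snd (anc_moves r x ! i)), h, snd (snd (anc_moves r x ! i))) \<partial>lborel))"
proof -
  let ?Q = "anc_total_rate r x"
  let ?tg = "\<lambda>i. fst (snd (anc_moves r x ! i))" and ?fl = "\<lambda>i. snd (snd (anc_moves r x ! i))"
  let ?rt = "\<lambda>i. fst (anc_moves r x ! i)"
  define Kf where "Kf i = (\<integral>\<^sup>+e. g (?tg i, e / ?Q, ?fl i) \<partial>Expo)" for i
  interpret E: prob_space Expo by (rule prob_Expo)
  interpret U: prob_space Unif by (rule prob_Unif)
  have "(\<integral>\<^sup>+z. g (anc_step r x z) \<partial>anc_noise) = (\<integral>\<^sup>+u. \<integral>\<^sup>+e. g (anc_step r x (u, e)) \<partial>Expo \<partial>Unif)"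
    unfolding anc_noise_def by (rule E.nn_integral_fst[symmetric]) measurable
  also have "\<dots> = (\<integral>\<^sup>+u. (\<Sum>i<5. Kf i * indicator {u. ach r x u = i} u) \<partial>Unif)"
  proof (rule nn_integral_cong_AE)
    have AE1: "AE u in Unif. u \<in> {0..1} \<and> u \<noteq> 1"
    proof (rule AE_uniform_measureI)
      show "AE u in lborel. u \<in> {0..1::real} \<longrightarrow> u \<in> {0..1} \<and> u \<noteq> (1::real)"
        using AE_lborel_singleton[of "1::real"] by (rule AE_mp) (auto intro!: AE_I2)
    qed auto
    show "AE u in Unif. (\<integral>\<^sup>+e. g (anc_step r x (u, e)) \<partial>Expo) = (\<Sum>i<5. Kf i * indicator {u. ach r x u = i} u)"
      using AE1
    proof eventually_elim
      case (elim u)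
      then have a5: "ach r x u < 5" using ach_lt5[OF r Q] by auto
      have "(\<Sum>i<5. Kf i * indicator {u. ach r x u = i} u) = (\<Sum>i<5. if ach r x u = i then Kf i else 0)"
        by (intro sum.cong) (auto simp: indicator_def)
      also have "\<dots> = Kf (ach r x u)" using a5 by simp
      also have "\<dots> = (\<integral>\<^sup>+e. g (anc_step r x (u, e)) \<partial>Expo)"
        unfolding Kf_def by (intro nn_integral_cong) (simp add: step_alt a5 Let_def)
      finally show ?case ..
    qed
  qed
  also have "\<dots> = (\<Sum>i<5. Kf i * emeasure Unif {u. ach r x u = i})"
  proof -
    have m: "{u. ach r x u = i} \<in> sets Unif" for i
      using ach_meas[of r x] by (simp add: measurable_count_space_eq2_countable vimage_def Collect_conj_eq)
    show ?thesis
      by (subst nn_integral_sum) (auto simp: m nn_integral_cmult_indicator)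
  qed
  also have "\<dots> = (\<Sum>i<5. Kf i * ennreal (?rt i / ?Q))"
    using emeasure_ach[OF r Q] by simp
  also have "\<dots> = (\<Sum>i<5. ennreal (?rt i) * (\<integral>\<^sup>+h. indicator {0..} h * ennreal (exp (- ?Q * h))
        * g (?tg i, h, ?fl i) \<partial>lborel))"
  proof (intro sum.cong refl)
    fix i :: nat assume i: "i \<in> {..<5}"
    have rt: "0 \<le> ?rt i" using rate_nonneg[OF r] i by simp
    have "Kf i = ennreal ?Q * (\<integral>\<^sup>+h. indicator {0..} h * ennreal (exp (- ?Q * h)) * g (?tg i, h, ?fl i) \<partial>lborel)"
      unfolding Kf_def by (rule Expo_affine[OF Q, where g="\<lambda>h. g (?tg i, h, ?fl i)"]) measurable
    moreover have "ennreal ?Q * ennreal (?rt i / ?Q) = ennreal (?rt i)"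
      using Q rt by (simp add: ennreal_mult[symmetric])
    ultimately show "Kf i * ennreal (?rt i / ?Q) = ennreal (?rt i) * (\<integral>\<^sup>+h. indicator {0..} h * ennreal (exp (- ?Q * h))
        * g (?tg i, h, ?fl i) \<partial>lborel)"
      by (metis (no_types, lifting) mult.assoc mult.commute)
  qed
  finally show ?thesis .
qed

lemma kernel0:
  fixes g :: "anc_state \<times> real \<times> bool \<Rightarrow> ennreal"
  assumes Q: "anc_total_rate r x \<le> 0"
    and g[measurable]: "g \<in> borel_measurable (count_space UNIV \<Otimes>\<^sub>M borel \<Otimes>\<^sub>M count_space UNIV)"
  shows "(\<integral>\<^sup>+z. g (anc_step r x z) \<partial>anc_noise) =
    (\<integral>\<^sup>+h. indicator {0..} h * ennreal (exp (- h)) * g (x, h, False) \<partial>lborel)"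
proof -
  interpret E: prob_space Expo by (rule prob_Expo)
  interpret U: prob_space Unif by (rule prob_Unif)
  have st: "anc_step r x (u, e) = (x, e, False)" for u e using Q by (simp add: anc_step_def)
  have "(\<integral>\<^sup>+z. g (anc_step r x z) \<partial>anc_noise) = (\<integral>\<^sup>+u. \<integral>\<^sup>+e. g (anc_step r x (u, e)) \<partial>Expo \<partial>Unif)"
    unfolding anc_noise_def by (rule E.nn_integral_fst[symmetric]) measurable
  also have "\<dots> = (\<integral>\<^sup>+u. \<integral>\<^sup>+e. g (x, e, False) \<partial>Expo \<partial>Unif)" by (simp add: st)
  also have "\<dots> = (\<integral>\<^sup>+e. g (x, e, False) \<partial>Expo)" by (simp add: U.emeasure_space_1)
  also have "\<dots> = (\<integral>\<^sup>+e. ennreal (exponential_density 1 e) * g (x, e, False) \<partial>lborel)"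
    by (subst nn_integral_density) auto
  also have "\<dots> = (\<integral>\<^sup>+h. indicator {0..} h * ennreal (exp (- h)) * g (x, h, False) \<partial>lborel)"
    by (intro nn_integral_cong) (auto simp: exponential_density_def indicator_def)
  finally show ?thesis .
qed

lemma Omega_split:
  assumes f[measurable]: "f \<in> borel_measurable anc_Omega"
  shows "(\<integral>\<^sup>+\<omega>. f \<omega> \<partial>anc_Omega) = (\<integral>\<^sup>+z. \<integral>\<^sup>+\<omega>'. f (case_nat z \<omega>') \<partial>anc_Omega \<partial>anc_noise)"
proof -
  have m: "(\<lambda>(s, \<omega>). case_nat s \<omega>) \<in> (anc_noise \<Otimes>\<^sub>M anc_Omega) \<rightarrow>\<^sub>M anc_Omega"
    unfolding Omega_eq by measurable
  have "(\<integral>\<^sup>+\<omega>. f \<omega> \<partial>anc_Omega) = (\<integral>\<^sup>+\<omega>. f \<omega> \<partial>distr (anc_noise \<Otimes>\<^sub>M anc_Omega) anc_Omega (\<lambda>(s, \<omega>). case_nat s \<omega>))"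
    unfolding Omega_eq Seq.PiM_iter ..
  also have "\<dots> = (\<integral>\<^sup>+p. f (case_nat (fst p) (snd p)) \<partial>(anc_noise \<Otimes>\<^sub>M anc_Omega))"
    using m by (subst nn_integral_distr) (auto simp: case_prod_beta)
  also have "\<dots> = (\<integral>\<^sup>+z. \<integral>\<^sup>+\<omega>'. f (case_nat z \<omega>') \<partial>anc_Omega \<partial>anc_noise)"
  proof -
    have "(\<lambda>p. case_nat (fst p) (snd p)) \<in> (anc_noise \<Otimes>\<^sub>M anc_Omega) \<rightarrow>\<^sub>M anc_Omega"
      using m by (simp add: case_prod_beta)
    then have mm: "(\<lambda>p. f (case_nat (fst p) (snd p))) \<in> borel_measurable (anc_noise \<Otimes>\<^sub>M anc_Omega)"
      by measurable
    show ?thesis using Om.nn_integral_fst[OF mm] by simp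
  qed
  finally show ?thesis by (simp add: case_prod_beta)
qed

lemma exp_integral:
  assumes l: "0 < l"
  shows "(\<integral>\<^sup>+h. indicator {0..} h * ennreal (exp (- l * h)) \<partial>lborel) = ennreal (1 / l)"
proof -
  interpret P: prob_space "density lborel (exponential_density l)"
    by (rule prob_space_exponential_density[OF l])
  have "1 = emeasure (density lborel (exponential_density l)) UNIV"
    using P.emeasure_space_1 by simp
  also have "\<dots> = (\<integral>\<^sup>+h. ennreal (exponential_density l h) \<partial>lborel)"
    by (subst emeasure_density) auto
  also have "\<dots> = (\<integral>\<^sup>+h. ennreal l * (indicator {0..} h * ennreal (exp (- l * h))) \<partial>lborel)"
    using l by (intro nn_integral_cong) (auto simp: exponential_density_def indicator_def ennreal_mult mult.commute)
  also have "\<dots> = ennreal l * (\<integral>\<^sup>+h. indicator {0..} h * ennreal (exp (- l * h)) \<partial>lborel)"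
    by (subst nn_integral_cmult) auto
  finally have "ennreal l * (\<integral>\<^sup>+h. indicator {0..} h * ennreal (exp (- l * h)) \<partial>lborel) = 1" ..
  then have "(\<integral>\<^sup>+h. indicator {0..} h * ennreal (exp (- l * h)) \<partial>lborel) = 1 / ennreal l"
    using l by (metis ennreal_eq_0_iff ennreal_neq_top ennreal_divide_eq_top_iff mult.commute
      ennreal_mult_divide_eq not_less order_refl)
  then show ?thesis using l by (metis divide_ennreal ennreal_1 zero_le_one)
qed

lemma exp_integral_tail:
  assumes l: "0 < l" and t: "0 \<le> t"
  shows "(\<integral>\<^sup>+h. indicator {t<..} h * ennreal (exp (- l * h)) \<partial>lborel) = ennreal (exp (- l * t) / l)"
proof -
  have "(\<integral>\<^sup>+h. indicator {t<..} h * ennreal (exp (- l * h)) \<partial>lborel)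
      = (\<integral>\<^sup>+s. indicator {t<..} (t + s) * ennreal (exp (- l * (t + s))) \<partial>lborel)"
    using nn_integral_real_affine[where f="\<lambda>h. indicator {t<..} h * ennreal (exp (- l * h))" and c=1 and t=t] by simp
  also have "\<dots> = (\<integral>\<^sup>+s. ennreal (exp (- l * t)) * (indicator {0..} s * ennreal (exp (- l * s))) \<partial>lborel)"
  proof (rule nn_integral_cong_AE)
    show "AE s in lborel. indicator {t<..} (t + s) * ennreal (exp (- l * (t + s))) =
        ennreal (exp (- l * t)) * (indicator {0..} s * ennreal (exp (- l * s)))"
      using AE_lborel_singleton[of "0::real"] 
      by (rule AE_mp) (auto intro!: AE_I2 simp: indicator_def ennreal_mult[symmetric] mult_exp_exp algebra_simps)
  qed
  also have "\<dots> = ennreal (exp (- l * t)) * ennreal (1 / l)"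
    by (subst nn_integral_cmult) (use exp_integral[OF l] in auto)
  finally show ?thesis using l by (simp add: ennreal_mult[symmetric])
qed

definition wt :: "anc_state \<Rightarrow> real" where
  "wt y = 2 ^ (fst y + fst (snd y) + snd (snd y))"

lemma wt_pos: "0 < wt y" unfolding wt_def by simp

lemma total_rate_formula:
  "anc_total_rate r (a, b, c) = real (a + b + c) * (real (a + b + c) - 1) / 2 + r * real c / 2"
  unfolding anc_total_rate_def by (simp add: anc_moves_def eval_nat_numeral field_simps)

lemma key_ineq:
  assumes r': "0 \<le> r'" "r' \<le> r"
  shows "(\<Sum>i<5. fst (anc_moves r' x ! i) * wt (fst (snd (anc_moves r' x ! i))))
     \<le> 3/4 * (anc_total_rate r x + (5 * r + 1)^2) * wt x"
proof -
  obtain a b c where x: "x = (a, b, c)" by (cases x) auto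
  define W :: real where "W = 2 ^ (a + b + c)"
  have W: "0 < W" unfolding W_def by simp
  have r0: "0 \<le> r" using r' by simp
  have h0: "real c * r' / 2 * 2 ^ (a + 1 + (b + 1) + (c - 1)) \<le> r * real c * W"
  proof (cases c)
    case 0 then show ?thesis using W r0 by simp
  next
    case (Suc k)
    have "(2::real) ^ (a + 1 + (b + 1) + (c - 1)) = 2 * W" unfolding W_def Suc by (simp add: power_add)
    then show ?thesis using r' W by (simp add: Suc mult_right_mono)
  qed
  have h1: "real a * real b * 2 ^ (a - 1 + (b - 1) + (c + 1)) \<le> real a * real b * W / 2"
  proof (cases "a = 0 \<or> b = 0")
    case True then show ?thesis by auto
  next
    case False
    then obtain a' b' where ab: "a = Suc a'" "b = Suc b'" by (metis not0_implies_Suc)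
    have e: "(2::real) ^ (a - 1 + (b - 1) + (c + 1)) = W / 2" unfolding W_def ab by (simp add: power_add)
    show ?thesis by (subst e) simp
  qed
  have h2: "(real a * real c + real a * (real a - 1) / 2) * 2 ^ (a - 1 + b + c) \<le> (real a * real c + real a * (real a - 1) / 2) * W / 2"
  proof (cases a)
    case 0 then show ?thesis by simp
  next
    case (Suc a')
    have e: "(2::real) ^ (a - 1 + b + c) = W / 2" unfolding W_def Suc by (simp add: power_add)
    show ?thesis by (subst e) simp
  qed
  have h3: "(real b * real c + real b * (real b - 1) / 2) * 2 ^ (a + (b - 1) + c) \<le> (real b * real c + real b * (real b - 1) / 2) * W / 2"
  proof (cases b)
    case 0 then show ?thesis by simp
  next
    case (Suc b')
    have e: "(2::real) ^ (a + (b - 1) + c) = W / 2" unfolding W_def Suc by (simp add: power_add)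
    show ?thesis by (subst e) simp
  qed
  have h4: "real c * (real c - 1) / 2 * 2 ^ (a + b + (c - 1)) \<le> real c * (real c - 1) / 2 * W / 2"
  proof (cases c)
    case 0 then show ?thesis by simp
  next
    case (Suc c')
    have e: "(2::real) ^ (a + b + (c - 1)) = W / 2" unfolding W_def Suc by (simp add: power_add)
    show ?thesis by (subst e) simp
  qed
  define N where "N = real (a + b + c)"
  have coal: "real a * real b + (real a * real c + real a * (real a - 1) / 2) + (real b * real c + real b * (real b - 1) / 2)
      + real c * (real c - 1) / 2 = N * (N - 1) / 2"
    unfolding N_def of_nat_add by (simp add: field_simps)
  have lhs: "(\<Sum>i<5. fst (anc_moves r' x ! i) * wt (fst (snd (anc_moves r' x ! i))))
     \<le> r * real c * W + N * (N - 1) / 2 * W / 2"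
  proof -
    have "(\<Sum>i<5. fst (anc_moves r' x ! i) * wt (fst (snd (anc_moves r' x ! i)))) =
      real c * r' / 2 * 2 ^ (a + 1 + (b + 1) + (c - 1)) + real a * real b * 2 ^ (a - 1 + (b - 1) + (c + 1))
      + (real a * real c + real a * (real a - 1) / 2) * 2 ^ (a - 1 + b + c)
      + (real b * real c + real b * (real b - 1) / 2) * 2 ^ (a + (b - 1) + c)
      + real c * (real c - 1) / 2 * 2 ^ (a + b + (c - 1))"
      by (simp add: x anc_moves_def wt_def eval_nat_numeral)
    also have "\<dots> \<le> r * real c * W + (real a * real b * W / 2 + (real a * real c + real a * (real a - 1) / 2) * W / 2
      + (real b * real c + real b * (real b - 1) / 2) * W / 2 + real c * (real c - 1) / 2 * W / 2)"
      using h0 h1 h2 h3 h4 by linarith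
    also have "real a * real b * W / 2 + (real a * real c + real a * (real a - 1) / 2) * W / 2
      + (real b * real c + real b * (real b - 1) / 2) * W / 2 + real c * (real c - 1) / 2 * W / 2
      = N * (N - 1) / 2 * W / 2"
      by (subst coal[symmetric]) (simp only: distrib_right add_divide_distrib)
    finally show ?thesis by simp
  qed
  have Q: "anc_total_rate r x = N * (N - 1) / 2 + r * real c / 2"
    unfolding x total_rate_formula N_def ..
  have cN: "real c \<le> N" unfolding N_def by simp
  have N0: "0 \<le> N" unfolding N_def by simp
  have core: "5 * (r * real c) \<le> N * (N - 1) + 6 * (5 * r + 1)^2"
  proof -
    have "r * real c \<le> r * N" using cN r0 by (simp add: mult_left_mono)
    moreover have "5 * (r * N) \<le> N * (N - 1) + 6 * (5 * r + 1)^2"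
    proof (cases "N \<le> 5 * r + 1")
      case True
      have "5 * (r * N) \<le> 5 * (r * (5 * r + 1))" using True r0 by (simp add: mult_left_mono)
      moreover have "5 * (r * (5 * r + 1)) \<le> 6 * (5 * r + 1)^2" using r0 by (simp add: power2_eq_square algebra_simps)
      moreover have "0 \<le> N * (N - 1)" unfolding N_def by (cases "a + b + c") auto
      ultimately show ?thesis by linarith
    next
      case False
      then have "5 * r \<le> N - 1" by simp
      then have "N * (5 * r) \<le> N * (N - 1)" using N0 by (simp add: mult_left_mono)
      moreover have "5 * (r * N) = N * (5 * r)" by simp
      moreover have "0 \<le> (5 * r + 1)^2" by simp
      ultimately show ?thesis by linarith
    qed
    ultimately show ?thesis by linarith
  qed
  have "r * real c * W + N * (N - 1) / 2 * W / 2 \<le> 3/4 * (anc_total_rate r x + (5 * r + 1)^2) * W"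
  proof -
    have "r * real c + N * (N - 1) / 4 \<le> 3/4 * (N * (N - 1) / 2 + r * real c / 2 + (5 * r + 1)^2)"
    proof -
      have e: "3/4 * (N * (N - 1) / 2 + r * real c / 2 + (5 * r + 1)^2) = 3/8 * (N * (N - 1)) + 3/8 * (r * real c) + 3/4 * (5 * r + 1)^2"
        by (simp add: algebra_simps)
      show ?thesis using core e by linarith
    qed
    then have "(r * real c + N * (N - 1) / 4) * W \<le> (3/4 * (N * (N - 1) / 2 + r * real c / 2 + (5 * r + 1)^2)) * W"
      using W by (simp add: mult_right_mono)
    then show ?thesis unfolding Q by (simp add: algebra_simps)
  qed
  moreover have "wt x = W" unfolding wt_def W_def x by simp
  ultimately show ?thesis using lhs by simp
qed

lemma EW:
  assumes K: "0 \<le> K" and l: "0 < Q + b"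
  shows "(\<integral>\<^sup>+h. indicator {0..} h * ennreal (exp (- Q * h)) * ennreal (K * exp (b * (t - h))) \<partial>lborel)
    = ennreal (K * exp (b * t) / (Q + b))"
proof -
  have "(\<integral>\<^sup>+h. indicator {0..} h * ennreal (exp (- Q * h)) * ennreal (K * exp (b * (t - h))) \<partial>lborel)
     = (\<integral>\<^sup>+h. ennreal (K * exp (b * t)) * (indicator {0..} h * ennreal (exp (- (Q + b) * h))) \<partial>lborel)"
    using K by (intro nn_integral_cong) (auto simp: ennreal_mult[symmetric] mult_exp_exp algebra_simps indicator_def)
  also have "\<dots> = ennreal (K * exp (b * t)) * ennreal (1 / (Q + b))"
    by (subst nn_integral_cmult) (use exp_integral[OF l] in auto)
  also have "\<dots> = ennreal (K * exp (b * t) / (Q + b))"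
    using K l by (simp add: ennreal_mult[symmetric])
  finally show ?thesis .
qed

definition beta :: "real \<Rightarrow> real" where "beta r = (5 * r + 1)^2"

lemma beta_ge1: "0 \<le> r \<Longrightarrow> 1 \<le> beta r"
  unfolding beta_def by (intro one_le_power) simp

lemma total_rate_nonneg: "0 \<le> r \<Longrightarrow> 0 \<le> anc_total_rate r x"
  unfolding anc_total_rate_def by (intro sum_nonneg) (auto intro: rate_nonneg)

lemma wt_ge1: "1 \<le> wt y" unfolding wt_def by simp

lemma wt_nonneg[simp]: "0 \<le> wt y" using wt_pos[of y] by simp

lemma jt_sets[measurable]: "{\<omega>. anc_jtime r x \<omega> n \<le> t} \<in> sets anc_Omega"
proof -
  have "{\<omega>\<in>space anc_Omega. anc_jtime r x \<omega> n \<le> t} \<in> sets anc_Omega" by measurable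
  then show ?thesis by (simp add: space_Omega)
qed

lemma jtime_shift_case: "anc_jtime r x (case_nat z \<omega>') (Suc n) =
   fst (snd (anc_step r x z)) + anc_jtime r (fst (anc_step r x z)) \<omega>' n"
  using jtime_Suc_shift[of r x "case_nat z \<omega>'" n] by simp

lemma g_meas[measurable]:
  "(\<lambda>p::anc_state \<times> real \<times> bool. f (fst p)) \<in> count_space UNIV \<Otimes>\<^sub>M borel \<Otimes>\<^sub>M count_space UNIV \<rightarrow>\<^sub>M count_space UNIV"
  by measurable

lemma NE:
  assumes r: "0 \<le> r"
  shows "emeasure anc_Omega {\<omega>. anc_jtime r x \<omega> n \<le> t} \<le> ennreal ((3/4)^n * exp (beta r * t) * wt x)"
proof (induction n arbitrary: x t)
  case 0
  show ?case
  proof (cases "0 \<le> t")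
    case True
    have "emeasure anc_Omega {\<omega>. anc_jtime r x \<omega> 0 \<le> t} \<le> 1" by (rule Om.emeasure_le_1)
    also have "1 \<le> ennreal (exp (beta r * t) * wt x)"
    proof -
      have "1 \<le> exp (beta r * t)" using True beta_ge1[OF r] by simp
      then have "1 * 1 \<le> exp (beta r * t) * wt x" using wt_ge1[of x] by (intro mult_mono) auto
      then show ?thesis by (simp add: ennreal_1[symmetric] del: ennreal_1)
    qed
    finally show ?thesis by simp
  next
    case False then show ?thesis by (simp add: anc_jtime_def)
  qed
next
  case (Suc n)
  let ?B = "\<lambda>y s. ennreal ((3/4)^n * exp (beta r * s) * wt y)"
  have "emeasure anc_Omega {\<omega>. anc_jtime r x \<omega> (Suc n) \<le> t} = (\<integral>\<^sup>+\<omega>. indicator {\<omega>. anc_jtime r x \<omega> (Suc n) \<le> t} \<omega> \<partial>anc_Omega)"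
    by (subst nn_integral_indicator) (auto simp: jt_sets)
  also have "\<dots> = (\<integral>\<^sup>+z. \<integral>\<^sup>+\<omega>'. indicator {\<omega>. anc_jtime r x \<omega> (Suc n) \<le> t} (case_nat z \<omega>') \<partial>anc_Omega \<partial>anc_noise)"
    by (rule Omega_split) measurable
  also have "\<dots> = (\<integral>\<^sup>+z. emeasure anc_Omega {\<omega>'. anc_jtime r (fst (anc_step r x z)) \<omega>' n \<le> t - fst (snd (anc_step r x z))} \<partial>anc_noise)"
  proof (intro nn_integral_cong)
    fix z
    have "(\<lambda>\<omega>'. indicator {\<omega>. anc_jtime r x \<omega> (Suc n) \<le> t} (case_nat z \<omega>') :: ennreal) =
       indicator {\<omega>'. anc_jtime r (fst (anc_step r x z)) \<omega>' n \<le> t - fst (snd (anc_step r x z))}"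
      by (auto simp: fun_eq_iff indicator_def jtime_shift_case algebra_simps)
    then show "(\<integral>\<^sup>+\<omega>'. indicator {\<omega>. anc_jtime r x \<omega> (Suc n) \<le> t} (case_nat z \<omega>') \<partial>anc_Omega) =
       emeasure anc_Omega {\<omega>'. anc_jtime r (fst (anc_step r x z)) \<omega>' n \<le> t - fst (snd (anc_step r x z))}"
      by (simp add: jt_sets)
  qed
  also have "\<dots> \<le> (\<integral>\<^sup>+z. (\<lambda>p. ?B (fst p) (t - fst (snd p))) (anc_step r x z) \<partial>anc_noise)"
    by (intro nn_integral_mono) (simp add: Suc.IH)
  also have "\<dots> \<le> ennreal ((3/4)^(Suc n) * exp (beta r * t) * wt x)"
  proof (cases "0 < anc_total_rate r x")
    case Q: True
    let ?Q = "anc_total_rate r x"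
    define D where "D = ?Q + beta r"
    have D: "0 < D" using Q beta_ge1[OF r] unfolding D_def by simp
    have rt: "\<And>i. i < 5 \<Longrightarrow> 0 \<le> fst (anc_moves r x ! i)" using rate_nonneg[OF r] by blast
    have "(\<integral>\<^sup>+z. (\<lambda>p. ?B (fst p) (t - fst (snd p))) (anc_step r x z) \<partial>anc_noise) =
      (\<Sum>i<5. ennreal (fst (anc_moves r x ! i)) * (\<integral>\<^sup>+h. indicator {0..} h * ennreal (exp (- ?Q * h))
        * ennreal (((3/4)^n * wt (fst (snd (anc_moves r x ! i)))) * exp (beta r * (t - h))) \<partial>lborel))"
      by (subst kernel[OF r Q]) (measurable, simp add: mult_ac)
    also have "\<dots> = (\<Sum>i<5. ennreal (fst (anc_moves r x ! i) * ((3/4)^n * wt (fst (snd (anc_moves r x ! i))) * exp (beta r * t) / D)))"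
    proof (intro sum.cong refl)
      fix i :: nat assume i: "i \<in> {..<5}"
      have "(\<integral>\<^sup>+h. indicator {0..} h * ennreal (exp (- ?Q * h))
        * ennreal (((3/4)^n * wt (fst (snd (anc_moves r x ! i)))) * exp (beta r * (t - h))) \<partial>lborel)
        = ennreal ((3/4)^n * wt (fst (snd (anc_moves r x ! i))) * exp (beta r * t) / D)"
        unfolding D_def by (rule EW) (use D in \<open>auto simp: D_def\<close>)
      then show "ennreal (fst (anc_moves r x ! i)) * (\<integral>\<^sup>+h. indicator {0..} h * ennreal (exp (- ?Q * h))
        * ennreal (((3/4)^n * wt (fst (snd (anc_moves r x ! i)))) * exp (beta r * (t - h))) \<partial>lborel)
        = ennreal (fst (anc_moves r x ! i) * ((3/4)^n * wt (fst (snd (anc_moves r x ! i))) * exp (beta r * t) / D))"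
        using rt[of i] i D by (simp add: ennreal_mult[symmetric])
    qed
    also have "\<dots> = ennreal (\<Sum>i<5. fst (anc_moves r x ! i) * ((3/4)^n * wt (fst (snd (anc_moves r x ! i))) * exp (beta r * t) / D))"
      using rt D by (intro sum_ennreal) (auto intro!: mult_nonneg_nonneg divide_nonneg_pos)
    also have "\<dots> \<le> ennreal ((3/4)^(Suc n) * exp (beta r * t) * wt x)"
    proof (rule ennreal_leI)
      have "(\<Sum>i<5. fst (anc_moves r x ! i) * ((3/4)^n * wt (fst (snd (anc_moves r x ! i))) * exp (beta r * t) / D))
        = ((3/4)^n * exp (beta r * t) / D) * (\<Sum>i<5. fst (anc_moves r x ! i) * wt (fst (snd (anc_moves r x ! i))))"
        by (simp add: sum_distrib_left sum_divide_distrib mult_ac)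
      also have "\<dots> \<le> ((3/4)^n * exp (beta r * t) / D) * (3/4 * D * wt x)"
        using key_ineq[OF r order_refl, of x] D
        by (intro mult_left_mono) (auto simp: beta_def D_def)
      also have "\<dots> = (3/4)^(Suc n) * exp (beta r * t) * wt x"
        using D by (simp add: field_simps)
      finally show "(\<Sum>i<5. fst (anc_moves r x ! i) * ((3/4)^n * wt (fst (snd (anc_moves r x ! i))) * exp (beta r * t) / D))
        \<le> (3/4)^(Suc n) * exp (beta r * t) * wt x" .
    qed
    finally show ?thesis .
  next
    case False
    then have Q: "anc_total_rate r x \<le> 0" by simp
    have "(\<integral>\<^sup>+z. (\<lambda>p. ?B (fst p) (t - fst (snd p))) (anc_step r x z) \<partial>anc_noise) =
      (\<integral>\<^sup>+h. indicator {0..} h * ennreal (exp (- 1 * h)) * ennreal (((3/4)^n * wt x) * exp (beta r * (t - h))) \<partial>lborel)"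
      by (subst kernel0[OF Q]) (measurable, simp add: mult_ac)
    also have "\<dots> = ennreal ((3/4)^n * wt x * exp (beta r * t) / (1 + beta r))"
      using beta_ge1[OF r] wt_pos by (intro EW) auto
    also have "\<dots> \<le> ennreal ((3/4)^(Suc n) * exp (beta r * t) * wt x)"
    proof (rule ennreal_leI)
      have "1 / (1 + beta r) \<le> 3/4" using beta_ge1[OF r] by (simp add: field_simps)
      then have "((3/4)^n * wt x * exp (beta r * t)) * (1 / (1 + beta r)) \<le> ((3/4)^n * wt x * exp (beta r * t)) * (3/4)"
        using wt_pos by (intro mult_left_mono) auto
      then show "(3/4)^n * wt x * exp (beta r * t) / (1 + beta r) \<le> (3/4)^(Suc n) * exp (beta r * t) * wt x"
        by (simp add: mult_ac)
    qed
    finally show ?thesis .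
  qed
  finally show ?case .
qed

lemma AE_nonexpl:
  assumes r: "0 \<le> r"
  shows "AE \<omega> in anc_Omega. \<exists>k. t < anc_jtime r x \<omega> (Suc k)"
proof (rule AE_I)
  let ?S = "{\<omega>. \<forall>k. anc_jtime r x \<omega> (Suc k) \<le> t}"
  show "{\<omega> \<in> space anc_Omega. \<not> (\<exists>k. t < anc_jtime r x \<omega> (Suc k))} \<subseteq> ?S"
    by (auto simp: not_less)
  show Sm: "?S \<in> sets anc_Omega"
  proof -
    have "{\<omega>\<in>space anc_Omega. \<forall>k. anc_jtime r x \<omega> (Suc k) \<le> t} \<in> sets anc_Omega" by measurable
    then show ?thesis by (simp add: space_Omega)
  qed
  have le: "measure anc_Omega ?S \<le> (3/4)^(Suc n) * (exp (beta r * t) * wt x)" for n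
  proof -
    have "emeasure anc_Omega ?S \<le> emeasure anc_Omega {\<omega>. anc_jtime r x \<omega> (Suc n) \<le> t}"
      by (intro emeasure_mono) (auto simp: jt_sets)
    also have "\<dots> \<le> ennreal ((3/4)^(Suc n) * exp (beta r * t) * wt x)" by (rule NE[OF r])
    finally show ?thesis
      by (simp add: Om.emeasure_eq_measure mult.assoc)
  qed
  have lim: "(\<lambda>n. (3/4::real)^(Suc n) * (exp (beta r * t) * wt x)) \<longlonglongrightarrow> 0 * (exp (beta r * t) * wt x)"
    by (intro tendsto_mult tendsto_const LIMSEQ_Suc[OF LIMSEQ_power_zero]) auto
  have "measure anc_Omega ?S \<le> 0 * (exp (beta r * t) * wt x)"
    by (rule LIMSEQ_le_const[OF lim]) (use le in auto)
  then have "measure anc_Omega ?S \<le> 0" by simp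
  then have "measure anc_Omega ?S = 0" using measure_nonneg[of anc_Omega ?S] by linarith
  then show "emeasure anc_Omega ?S = 0" by (simp add: Om.emeasure_eq_measure)
qed

lemma index_meas_pair[measurable]:
  "(\<lambda>p. anc_index r x (fst p) (snd p)) \<in> (anc_Omega \<Otimes>\<^sub>M borel) \<rightarrow>\<^sub>M count_space UNIV"
  unfolding anc_index_def by measurable
lemma chain_meas_pair[measurable]:
  "(\<lambda>p. anc_chain r x (fst p) (snd p)) \<in> (anc_Omega \<Otimes>\<^sub>M borel) \<rightarrow>\<^sub>M count_space UNIV"
proof -
  have "(\<lambda>p. (\<lambda>k p. anc_path r x (fst p) k) (anc_index r x (fst p) (snd p)) p) \<in> (anc_Omega \<Otimes>\<^sub>M borel) \<rightarrow>\<^sub>M count_space UNIV"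
    by (rule measurable_compose_countable[OF _ index_meas_pair]) measurable
  then show ?thesis unfolding anc_chain_def by simp
qed

lemma c_meas_pair[measurable]:
  "(\<lambda>p. anc_c r x (fst p) (snd p)) \<in> (anc_Omega \<Otimes>\<^sub>M borel) \<rightarrow>\<^sub>M count_space UNIV"
proof -
  have "(\<lambda>p. (\<lambda>y p. snd (snd y)) (anc_chain r x (fst p) (snd p)) p) \<in> (anc_Omega \<Otimes>\<^sub>M borel) \<rightarrow>\<^sub>M count_space UNIV"
    by (rule measurable_compose_countable[OF _ chain_meas_pair]) measurable
  then show ?thesis unfolding anc_c_def by simp
qed

lemma index_meas_u[measurable]: "(\<lambda>u. anc_index r x \<omega> u) \<in> borel \<rightarrow>\<^sub>M count_space UNIV"
  unfolding anc_index_def by measurable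

lemma c_meas_u[measurable]: "(\<lambda>u. anc_c r x \<omega> u) \<in> borel \<rightarrow>\<^sub>M count_space UNIV"
proof -
  have "(\<lambda>u. (\<lambda>k u. snd (snd (anc_path r x \<omega> k))) (anc_index r x \<omega> u) u) \<in> borel \<rightarrow>\<^sub>M count_space UNIV"
    by (rule measurable_compose_countable[OF _ index_meas_u]) measurable
  then show ?thesis unfolding anc_c_def anc_chain_def by simp
qed

lemma pow_card: "(vv::real) ^ card {k. k < (i::nat) \<and> P k} = (\<Prod>k<i. if P k then vv else 1)"
proof (induction i)
  case 0 then show ?case by simp
next
  case (Suc i)
  have e: "{k. k < Suc i \<and> P k} = (if P i then insert i else id) {k. k < i \<and> P k}"
    by (auto simp: less_Suc_eq)
  show ?case using Suc by (simp add: e)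
qed

lemma pow_s_meas_pair[measurable]:
  "(\<lambda>p. (vv::real) ^ anc_s r x (fst p) (snd p)) \<in> borel_measurable (anc_Omega \<Otimes>\<^sub>M borel)"
proof -
  have "(\<lambda>p. (\<lambda>i p. (\<Prod>k<i. if anc_recomb r x (fst p) k then vv else 1)) (anc_index r x (fst p) (snd p)) p) \<in> borel_measurable (anc_Omega \<Otimes>\<^sub>M borel)"
    by (rule measurable_compose_countable[OF _ index_meas_pair]) measurable
  then show ?thesis unfolding anc_s_def pow_card by simp
qed

context
  fixes r :: real and x :: anc_state
begin

definition Iint :: "(nat \<Rightarrow> real \<times> real) \<Rightarrow> real \<Rightarrow> ennreal" where
  "Iint \<omega> t = (\<integral>\<^sup>+u. indicator {0..t} u * ennreal (real (anc_c r x \<omega> u)) \<partial>lborel)"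

lemma Lint_eq: "(LINT u:{0..t}|lborel. real (anc_c r x \<omega> u)) = enn2real (Iint \<omega> t)"
  unfolding set_lebesgue_integral_def Iint_def
  by (subst integral_eq_nn_integral) (auto simp: ennreal_mult' ennreal_indicator mult.commute)

lemma Iint_meas_pair[measurable]:
  "(\<lambda>p. Iint (fst p) (snd p)) \<in> borel_measurable (anc_Omega \<Otimes>\<^sub>M borel)"
proof -
  let ?M = "(anc_Omega \<Otimes>\<^sub>M borel) \<Otimes>\<^sub>M (borel :: real measure)"
  have q: "(\<lambda>q. (fst (fst q), snd q)) \<in> ?M \<rightarrow>\<^sub>M (anc_Omega \<Otimes>\<^sub>M borel)"
    by (intro measurable_Pair) auto
  have c: "(\<lambda>q. anc_c r x (fst (fst q)) (snd q)) \<in> ?M \<rightarrow>\<^sub>M count_space UNIV"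
    using measurable_compose[OF q c_meas_pair] by simp
  have c2: "(\<lambda>q. ennreal (real (anc_c r x (fst (fst q)) (snd q)))) \<in> borel_measurable ?M"
    by (rule measurable_compose[OF c]) simp
  have P: "{q \<in> space ?M. 0 \<le> snd q \<and> snd q \<le> snd (fst q)} \<in> sets ?M"
    by measurable
  have f: "(\<lambda>q. if 0 \<le> snd q \<and> snd q \<le> snd (fst q) then ennreal (real (anc_c r x (fst (fst q)) (snd q))) else 0) \<in> borel_measurable ?M"
    by (rule measurable_If[OF c2 _ P]) simp
  have f': "(\<lambda>q. if 0 \<le> snd q \<and> snd q \<le> snd (fst q) then ennreal (real (anc_c r x (fst (fst q)) (snd q))) else 0) \<in> borel_measurable ((anc_Omega \<Otimes>\<^sub>M borel) \<Otimes>\<^sub>M lborel)"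
  proof -
    have S: "sets ((anc_Omega \<Otimes>\<^sub>M borel) \<Otimes>\<^sub>M lborel) = sets ?M" by (intro sets_pair_measure_cong) auto
    show ?thesis using f measurable_cong_sets[OF S refl] by simp
  qed
  have e: "(\<lambda>p. Iint (fst p) (snd p)) = (\<lambda>p. \<integral>\<^sup>+u. (\<lambda>q. if 0 \<le> snd q \<and> snd q \<le> snd (fst q) then ennreal (real (anc_c r x (fst (fst q)) (snd q))) else 0) (p, u) \<partial>lborel)"
    unfolding Iint_def by (auto simp: fun_eq_iff indicator_def intro!: nn_integral_cong)
  show ?thesis unfolding e
    by (rule lborel.borel_measurable_nn_integral_fst[OF f'])
qed

end

definition Fg :: "real \<Rightarrow> real \<Rightarrow> real \<Rightarrow> (anc_state \<Rightarrow> real) \<Rightarrow> anc_state \<Rightarrow> (nat \<Rightarrow> real \<times> real) \<Rightarrow> real \<Rightarrow> real" where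
  "Fg r vv \<gamma> fs x \<omega> t = fs (anc_chain r x \<omega> t) * vv ^ anc_s r x \<omega> t
      * exp (- \<gamma> * (LINT u:{0..t}|lborel. real (anc_c r x \<omega> u)))"

definition EE :: "real \<Rightarrow> real \<Rightarrow> real \<Rightarrow> (anc_state \<Rightarrow> real) \<Rightarrow> anc_state \<Rightarrow> real \<Rightarrow> ennreal" where
  "EE r vv \<gamma> fs x t = (\<integral>\<^sup>+\<omega>. ennreal (Fg r vv \<gamma> fs x \<omega> t) \<partial>anc_Omega)"

lemma Fg_alt: "Fg r vv \<gamma> fs x \<omega> t = fs (anc_chain r x \<omega> t) * vv ^ anc_s r x \<omega> t * exp (- \<gamma> * enn2real (Iint r x \<omega> t))"
  unfolding Fg_def Lint_eq ..

lemma Fg_meas_pair[measurable]: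
  "(\<lambda>p. Fg r vv \<gamma> fs x (fst p) (snd p)) \<in> borel_measurable (anc_Omega \<Otimes>\<^sub>M borel)"
proof -
  have a: "(\<lambda>p. fs (anc_chain r x (fst p) (snd p))) \<in> borel_measurable (anc_Omega \<Otimes>\<^sub>M borel)"
    by (rule measurable_compose[OF chain_meas_pair]) simp
  have b: "(\<lambda>p. vv ^ (anc_s r x (fst p) (snd p))) \<in> borel_measurable (anc_Omega \<Otimes>\<^sub>M borel)"
    by (rule pow_s_meas_pair)
  show ?thesis unfolding Fg_alt using a b by measurable
qed

lemma Fg_meas[measurable]: "(\<lambda>\<omega>. Fg r vv \<gamma> fs x \<omega> t) \<in> borel_measurable anc_Omega"
  using measurable_compose[OF measurable_Pair2'[of t borel anc_Omega] Fg_meas_pair] by simp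

lemma EE_meas[measurable]: "(\<lambda>t. EE r vv \<gamma> fs x t) \<in> borel_measurable borel"
proof -
  have "(\<lambda>(t, \<omega>). ennreal (Fg r vv \<gamma> fs x \<omega> t)) \<in> borel_measurable (borel \<Otimes>\<^sub>M anc_Omega)"
  proof (subst measurable_pair_swap_iff)
    show "(\<lambda>(xa, y). case (y, xa) of (t, \<omega>) \<Rightarrow> ennreal (Fg r vv \<gamma> fs x \<omega> t)) \<in> borel_measurable (anc_Omega \<Otimes>\<^sub>M borel)"
      using Fg_meas_pair[of r vv \<gamma> fs x] by (simp add: case_prod_beta')
  qed
  then show ?thesis unfolding EE_def by (rule Om.borel_measurable_nn_integral)
qed

lemma Fg_nonneg:
  assumes "\<And>y. 0 \<le> fs y" "0 \<le> vv"
  shows "0 \<le> Fg r vv \<gamma> fs x \<omega> t"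
  unfolding Fg_def using assms by simp

lemma Lint_nonneg: "0 \<le> (LINT u:{0..t}|lborel. real (anc_c r x \<omega> u))"
  by (simp add: Lint_eq)

lemma Fg_le1:
  assumes "\<And>y. 0 \<le> fs y" "\<And>y. fs y \<le> 1" "0 \<le> vv" "vv \<le> 1" "0 \<le> \<gamma>"
  shows "Fg r vv \<gamma> fs x \<omega> t \<le> 1"
proof -
  have "exp (- \<gamma> * (LINT u:{0..t}|lborel. real (anc_c r x \<omega> u))) \<le> 1"
    using assms(5) Lint_nonneg[of t r x \<omega>] by (simp add: mult_nonneg_nonneg)
  moreover have "vv ^ anc_s r x \<omega> t \<le> 1" using assms(3,4) by (simp add: power_le_one)
  ultimately show ?thesis unfolding Fg_def using assms
    by (metis mult_le_one exp_ge_zero zero_le_power)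
qed

lemma EE_le1:
  assumes "\<And>y. 0 \<le> fs y" "\<And>y. fs y \<le> 1" "0 \<le> vv" "vv \<le> 1" "0 \<le> \<gamma>"
  shows "EE r vv \<gamma> fs x t \<le> 1"
proof -
  have "EE r vv \<gamma> fs x t \<le> (\<integral>\<^sup>+\<omega>. 1 \<partial>anc_Omega)"
    unfolding EE_def using Fg_le1[OF assms] by (intro nn_integral_mono) simp
  then show ?thesis by (simp add: Om.emeasure_space_1)
qed

lemma Iint_const:
  assumes "\<And>u. 0 \<le> u \<Longrightarrow> u \<le> t \<Longrightarrow> anc_c r x \<omega> u = C" "0 \<le> t"
  shows "Iint r x \<omega> t = ennreal (real C * t)"
proof -
  have "Iint r x \<omega> t = (\<integral>\<^sup>+u. ennreal (real C) * indicator {0..t} u \<partial>lborel)"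
    unfolding Iint_def using assms(1) by (intro nn_integral_cong) (auto simp: indicator_def)
  also have "\<dots> = ennreal (real C) * ennreal t" using assms(2) by (subst nn_integral_cmult_indicator) auto
  finally show ?thesis using assms(2) by (simp add: ennreal_mult)
qed

lemma Iint_finite:
  assumes ne: "\<exists>k. T < anc_jtime r y \<omega> (Suc k)"
  shows "Iint r y \<omega> T < \<infinity>"
proof -
  define M where "M = Max ((\<lambda>k. snd (snd (anc_path r y \<omega> k))) ` {..anc_index r y \<omega> T})"
  have b: "anc_c r y \<omega> u \<le> M" if "u \<le> T" for u
  proof -
    have "anc_index r y \<omega> u \<le> anc_index r y \<omega> T" by (rule index_mono[OF that ne])
    then show ?thesis unfolding M_def anc_c_def anc_chain_def by (intro Max_ge) auto
  qed
  have "Iint r y \<omega> T \<le> (\<integral>\<^sup>+u. ennreal (real M) * indicator {0..T} u \<partial>lborel)"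
    unfolding Iint_def using b by (intro nn_integral_mono) (auto simp: indicator_def)
  also have "\<dots> < \<infinity>" by (subst nn_integral_cmult_indicator) (auto simp: ennreal_mult_less_top emeasure_lborel_Icc_eq)
  finally show ?thesis .
qed

lemma Iint_split:
  fixes r :: real and x :: anc_state and z :: "real \<times> real" and \<omega>' :: "nat \<Rightarrow> real \<times> real"
  defines "y \<equiv> fst (anc_step r x z)" and "h \<equiv> fst (snd (anc_step r x z))"
  assumes h: "0 \<le> h" "h \<le> t" and ne: "\<exists>k. t - h < anc_jtime r y \<omega>' (Suc k)"
  shows "Iint r x (case_nat z \<omega>') t = ennreal (real (snd (snd x)) * h) + Iint r y \<omega>' (t - h)"
proof -
  let ?\<omega> = "case_nat z \<omega>'"
  have s0: "?\<omega> 0 = z" and ssh: "sh ?\<omega> = \<omega>'" by (auto simp: fun_eq_iff)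
  have eq: "indicator {0..t} u * ennreal (real (anc_c r x ?\<omega> u)) =
     indicator {0..<h} u * ennreal (real (snd (snd x))) + indicator {h..t} u * ennreal (real (anc_c r y \<omega>' (u - h)))" for u
  proof (cases "0 \<le> u \<and> u < h")
    case True
    then have "anc_chain r x ?\<omega> u = x" using chain_lt[of u r x ?\<omega>] s0 h_def by simp
    then show ?thesis using True h(2) by (auto simp: indicator_def anc_c_def)
  next
    case F: False
    show ?thesis
    proof (cases "h \<le> u \<and> u \<le> t")
      case True
      have ne': "\<exists>k. u - h < anc_jtime r y \<omega>' (Suc k)"
      proof -
        obtain k where "t - h < anc_jtime r y \<omega>' (Suc k)" using ne by blast
        then show ?thesis using True by (intro exI[of _ k]) linarith
      qed
      have "anc_chain r x ?\<omega> u = anc_chain r y \<omega>' (u - h)"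
        using chain_ge[of r x ?\<omega> u] True ne' s0 ssh unfolding y_def h_def by simp
      then show ?thesis using True h by (auto simp: indicator_def anc_c_def)
    next
      case False
      then show ?thesis using F h by (auto simp: indicator_def)
    qed
  qed
  have "Iint r x ?\<omega> t = (\<integral>\<^sup>+u. indicator {0..<h} u * ennreal (real (snd (snd x))) + indicator {h..t} u * ennreal (real (anc_c r y \<omega>' (u - h))) \<partial>lborel)"
    unfolding Iint_def eq ..
  also have "\<dots> = (\<integral>\<^sup>+u. indicator {0..<h} u * ennreal (real (snd (snd x))) \<partial>lborel) + (\<integral>\<^sup>+u. indicator {h..t} u * ennreal (real (anc_c r y \<omega>' (u - h))) \<partial>lborel)"
    by (rule nn_integral_add) measurable
  also have "(\<integral>\<^sup>+u. indicator {0..<h} u * ennreal (real (snd (snd x))) \<partial>lborel) = ennreal (real (snd (snd x)) * h)"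
    using h by (simp add: nn_integral_cmult_indicator mult.commute ennreal_mult)
  also have "(\<integral>\<^sup>+u. indicator {h..t} u * ennreal (real (anc_c r y \<omega>' (u - h))) \<partial>lborel) = Iint r y \<omega>' (t - h)"
  proof -
    have "(\<integral>\<^sup>+u. indicator {h..t} u * ennreal (real (anc_c r y \<omega>' (u - h))) \<partial>lborel)
      = ennreal \<bar>1\<bar> * (\<integral>\<^sup>+s. indicator {h..t} (h + 1 * s) * ennreal (real (anc_c r y \<omega>' (h + 1 * s - h))) \<partial>lborel)"
      by (rule nn_integral_real_affine[where c=1 and t=h]) measurable
    also have "\<dots> = Iint r y \<omega>' (t - h)"
      unfolding Iint_def by (auto intro!: nn_integral_cong simp: indicator_def)
    finally show ?thesis .
  qed
  finally show ?thesis .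
qed

lemma hold_nonneg: "0 \<le> snd z \<Longrightarrow> 0 \<le> anc_total_rate r x \<Longrightarrow> 0 \<le> fst (snd (anc_step r x z))"
  by (cases z) (auto simp: step_alt Let_def)

lemma AE_noise_nonneg: "AE z in anc_noise. 0 \<le> snd z"
proof (rule AE_I)
  interpret E: prob_space Expo by (rule prob_Expo)
  interpret U: prob_space Unif by (rule prob_Unif)
  show "{z \<in> space anc_noise. \<not> 0 \<le> snd z} \<subseteq> UNIV \<times> {..<0}" by auto
  show "UNIV \<times> {..<0::real} \<in> sets anc_noise" unfolding sets_noise by auto
  have "AE e in Expo. 0 \<le> e"
    by (subst AE_density) (auto simp: exponential_density_def intro!: AE_I2)
  then have "emeasure Expo {..<0} = 0"
    by (subst (asm) AE_iff_measurable[where N="{..<0}"]) auto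
  then show "emeasure anc_noise (UNIV \<times> {..<0::real}) = 0"
    unfolding anc_noise_def
    by (subst E.emeasure_pair_measure_Times) (auto simp: U.emeasure_space_1[simplified space_lborel space_uniform_measure])
qed

context
  fixes r vv \<gamma> :: real and fs :: "anc_state \<Rightarrow> real"
  assumes r: "0 \<le> r" and vv: "0 \<le> vv" and \<gamma>: "0 \<le> \<gamma>" and fs: "\<And>y. 0 \<le> fs y"
begin

lemma Fg_lt:
  assumes t: "0 \<le> t" "t < fst (snd (anc_step r x z))"
  shows "Fg r vv \<gamma> fs x (case_nat z \<omega>') t = fs x * exp (- \<gamma> * (real (snd (snd x)) * t))"
proof -
  let ?\<omega> = "case_nat z \<omega>'"
  have s0: "?\<omega> 0 = z" by simp
  have ch: "anc_chain r x ?\<omega> u = x" if "u \<le> t" for u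
    using chain_lt[of u r x ?\<omega>] t that by simp
  have I: "Iint r x ?\<omega> t = ennreal (real (snd (snd x)) * t)"
    by (rule Iint_const) (use ch t in \<open>auto simp: anc_c_def\<close>)
  have s: "anc_s r x ?\<omega> t = 0" using s_lt[of t r x ?\<omega>] t by simp
  show ?thesis unfolding Fg_alt I using ch[of t] s t by simp
qed

lemma Fg_ge:
  fixes x :: anc_state and z :: "real \<times> real" and \<omega>' :: "nat \<Rightarrow> real \<times> real"
  defines "y \<equiv> fst (anc_step r x z)" and "h \<equiv> fst (snd (anc_step r x z))" and "fl \<equiv> snd (snd (anc_step r x z))"
  assumes h: "0 \<le> h" "h \<le> t" and ne: "\<exists>k. t - h < anc_jtime r y \<omega>' (Suc k)"
  shows "Fg r vv \<gamma> fs x (case_nat z \<omega>') t = (vv ^ (if fl then 1 else 0) * exp (- \<gamma> * (real (snd (snd x)) * h))) * Fg r vv \<gamma> fs y \<omega>' (t - h)"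
proof -
  let ?\<omega> = "case_nat z \<omega>'"
  have s0: "?\<omega> 0 = z" and ssh: "sh ?\<omega> = \<omega>'" by (auto simp: fun_eq_iff)
  have ch: "anc_chain r x ?\<omega> t = anc_chain r y \<omega>' (t - h)"
    using chain_ge[of r x ?\<omega> t] h ne s0 ssh unfolding y_def h_def by simp
  have s: "anc_s r x ?\<omega> t = (if fl then 1 else 0) + anc_s r y \<omega>' (t - h)"
    using s_ge[of r x ?\<omega> t] h ne s0 ssh unfolding y_def h_def fl_def by simp
  have I: "Iint r x ?\<omega> t = ennreal (real (snd (snd x)) * h) + Iint r y \<omega>' (t - h)"
    using Iint_split[of r x z t \<omega>'] h ne unfolding y_def h_def by simp
  have fin: "Iint r y \<omega>' (t - h) < \<infinity>" by (rule Iint_finite[OF ne])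
  have L: "enn2real (Iint r x ?\<omega> t) = real (snd (snd x)) * h + enn2real (Iint r y \<omega>' (t - h))"
    unfolding I using fin h by (subst enn2real_plus) auto
  have E: "exp (- \<gamma> * (real (snd (snd x)) * h + enn2real (Iint r y \<omega>' (t - h)))) =
      exp (- \<gamma> * (real (snd (snd x)) * h)) * exp (- \<gamma> * enn2real (Iint r y \<omega>' (t - h)))"
    by (simp add: exp_add[symmetric] algebra_simps)
  show ?thesis unfolding Fg_alt ch s L E
    by (simp add: power_add mult_ac)
qed

end

lemma meas_count_fst:
  "(\<lambda>p. g (fst p) (snd p)) \<in> borel_measurable (count_space UNIV \<Otimes>\<^sub>M M)"
  if "\<And>y. g y \<in> borel_measurable M" for g :: "'a::countable \<Rightarrow> 'b \<Rightarrow> ennreal"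
  by (rule measurable_compose_countable[where g=fst]) (use that in measurable)

context
  fixes r vv \<gamma> :: real and fs :: "anc_state \<Rightarrow> real"
  assumes r: "0 \<le> r" and vv: "0 \<le> vv" and \<gamma>: "0 \<le> \<gamma>" and fs: "\<And>y. 0 \<le> fs y"
begin

lemma EE_rec:
  assumes Q: "0 < anc_total_rate r x" and t: "0 \<le> t"
  shows "EE r vv \<gamma> fs x t = ennreal (fs x * exp (- \<gamma> * (real (snd (snd x)) * t)) * exp (- anc_total_rate r x * t))
    + (\<Sum>i<5. ennreal (fst (anc_moves r x ! i) * vv ^ (if snd (snd (anc_moves r x ! i)) then 1 else 0))
        * (\<integral>\<^sup>+h. indicator {0..t} h * ennreal (exp (- (anc_total_rate r x + \<gamma> * real (snd (snd x))) * h))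
            * EE r vv \<gamma> fs (fst (snd (anc_moves r x ! i))) (t - h) \<partial>lborel))"
proof -
  let ?Q = "anc_total_rate r x" and ?c = "real (snd (snd x))"
  let ?A = "fs x * exp (- \<gamma> * (?c * t))"
  define K where "K fl h = vv ^ (if fl then 1 else 0) * exp (- \<gamma> * (?c * h))" for fl :: bool and h :: real
  define \<Phi> where "\<Phi> p = (if t < fst (snd p) then ennreal ?A
     else ennreal (K (snd (snd p)) (fst (snd p))) * EE r vv \<gamma> fs (fst p) (t - fst (snd p)))" for p :: "anc_state \<times> real \<times> bool"
  have K0: "0 \<le> K fl h" for fl h unfolding K_def using vv by simp
  have A0: "0 \<le> ?A" using fs by simp
  have \<Phi>m: "\<Phi> \<in> borel_measurable (count_space UNIV \<Otimes>\<^sub>M borel \<Otimes>\<^sub>M count_space UNIV)"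
  proof -
    have m1: "(\<lambda>p. ennreal (K (snd (snd p)) (fst (snd p)))) \<in> borel_measurable (count_space UNIV \<Otimes>\<^sub>M borel \<Otimes>\<^sub>M count_space UNIV)"
    proof -
      have "(\<lambda>p. (\<lambda>fl p. ennreal (K fl (fst (snd p)))) (snd (snd p)) p) \<in> borel_measurable (count_space UNIV \<Otimes>\<^sub>M borel \<Otimes>\<^sub>M count_space UNIV)"
        by (rule measurable_compose_countable) (unfold K_def, measurable)
      then show ?thesis by simp
    qed
    have m2: "(\<lambda>p. EE r vv \<gamma> fs (fst p) (t - fst (snd p))) \<in> borel_measurable (count_space UNIV \<Otimes>\<^sub>M borel \<Otimes>\<^sub>M count_space UNIV)"
    proof -
      have "(\<lambda>p. (\<lambda>y p. EE r vv \<gamma> fs y (t - fst (snd p))) (fst p) p) \<in> borel_measurable (count_space UNIV \<Otimes>\<^sub>M borel \<Otimes>\<^sub>M count_space UNIV)"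
        by (rule measurable_compose_countable) measurable
      then show ?thesis by simp
    qed
    show ?thesis unfolding \<Phi>_def using m1 m2 by measurable
  qed
  have "EE r vv \<gamma> fs x t = (\<integral>\<^sup>+z. \<integral>\<^sup>+\<omega>'. ennreal (Fg r vv \<gamma> fs x (case_nat z \<omega>') t) \<partial>anc_Omega \<partial>anc_noise)"
    unfolding EE_def by (rule Omega_split) measurable
  also have "\<dots> = (\<integral>\<^sup>+z. \<Phi> (anc_step r x z) \<partial>anc_noise)"
  proof (rule nn_integral_cong_AE)
    show "AE z in anc_noise. (\<integral>\<^sup>+\<omega>'. ennreal (Fg r vv \<gamma> fs x (case_nat z \<omega>') t) \<partial>anc_Omega) = \<Phi> (anc_step r x z)"
      using AE_noise_nonneg
    proof eventually_elim
      case (elim z)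
      define y where "y = fst (anc_step r x z)"
      define h where "h = fst (snd (anc_step r x z))"
      define fl where "fl = snd (snd (anc_step r x z))"
      have h0: "0 \<le> h" unfolding h_def using elim Q by (intro hold_nonneg) auto
      show ?case
      proof (cases "t < h")
        case True
        have "(\<integral>\<^sup>+\<omega>'. ennreal (Fg r vv \<gamma> fs x (case_nat z \<omega>') t) \<partial>anc_Omega) = (\<integral>\<^sup>+\<omega>'. ennreal ?A \<partial>anc_Omega)"
          using Fg_lt[OF r vv \<gamma> fs t] True unfolding h_def by simp
        also have "\<dots> = ennreal ?A" by (simp add: Om.emeasure_space_1)
        finally show ?thesis using True unfolding \<Phi>_def h_def by simp
      next
        case False
        have "(\<integral>\<^sup>+\<omega>'. ennreal (Fg r vv \<gamma> fs x (case_nat z \<omega>') t) \<partial>anc_Omega)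
           = (\<integral>\<^sup>+\<omega>'. ennreal (K fl h) * ennreal (Fg r vv \<gamma> fs y \<omega>' (t - h)) \<partial>anc_Omega)"
        proof (rule nn_integral_cong_AE)
          show "AE \<omega>' in anc_Omega. ennreal (Fg r vv \<gamma> fs x (case_nat z \<omega>') t) = ennreal (K fl h) * ennreal (Fg r vv \<gamma> fs y \<omega>' (t - h))"
            using AE_nonexpl[OF r, of "t - h" y]
          proof eventually_elim
            case (elim \<omega>')
            have "Fg r vv \<gamma> fs x (case_nat z \<omega>') t = K fl h * Fg r vv \<gamma> fs y \<omega>' (t - h)"
              using Fg_ge[OF r vv \<gamma> fs, of x z t \<omega>'] h0 False elim unfolding K_def y_def h_def fl_def by simp
            then show ?case using K0 Fg_nonneg[OF fs vv] by (simp add: ennreal_mult)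
          qed
        qed
        also have "\<dots> = ennreal (K fl h) * EE r vv \<gamma> fs y (t - h)"
          unfolding EE_def by (rule nn_integral_cmult) measurable
        finally show ?thesis using False unfolding \<Phi>_def y_def h_def fl_def by simp
      qed
    qed
  qed
  also have "\<dots> = (\<Sum>i<5. ennreal (fst (anc_moves r x ! i)) * (\<integral>\<^sup>+h. indicator {0..} h * ennreal (exp (- ?Q * h))
        * \<Phi> (fst (snd (anc_moves r x ! i)), h, snd (snd (anc_moves r x ! i))) \<partial>lborel))"
    by (rule kernel[OF r Q \<Phi>m])
  also have "\<dots> = (\<Sum>i<5. ennreal (fst (anc_moves r x ! i)) * (ennreal ?A * ennreal (exp (- ?Q * t) / ?Q)
        + ennreal (vv ^ (if snd (snd (anc_moves r x ! i)) then 1 else 0)) * (\<integral>\<^sup>+h. indicator {0..t} h * ennreal (exp (- (?Q + \<gamma> * ?c) * h))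
            * EE r vv \<gamma> fs (fst (snd (anc_moves r x ! i))) (t - h) \<partial>lborel)))"
  proof (intro sum.cong refl arg_cong2[where f="(*)"])
    fix i :: nat
    let ?y = "fst (snd (anc_moves r x ! i))" and ?fl = "snd (snd (anc_moves r x ! i))"
    let ?E = "\<lambda>h. EE r vv \<gamma> fs ?y (t - h)"
    have pt: "indicator {0..} h * ennreal (exp (- ?Q * h)) * \<Phi> (?y, h, ?fl) =
       ennreal ?A * (indicator {t<..} h * ennreal (exp (- ?Q * h))) +
       ennreal (vv ^ (if ?fl then 1 else 0)) * (indicator {0..t} h * ennreal (exp (- (?Q + \<gamma> * ?c) * h)) * ?E h)" for h
    proof -
      consider "h < 0" | "0 \<le> h" "h \<le> t" | "t < h" by linarith
      then show ?thesis
      proof cases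
        case 1 then show ?thesis using t by (auto simp: indicator_def)
      next
        case 2
        have e: "exp (- (?Q + \<gamma> * ?c) * h) = exp (- ?Q * h) * exp (- \<gamma> * (?c * h))"
          by (simp add: exp_add[symmetric] algebra_simps)
        have "ennreal (exp (- ?Q * h)) * (ennreal (vv ^ (if ?fl then 1 else 0) * exp (- \<gamma> * (?c * h))) * ?E h)
           = ennreal (vv ^ (if ?fl then 1 else 0)) * (ennreal (exp (- (?Q + \<gamma> * ?c) * h)) * ?E h)"
          unfolding e using vv by (simp add: ennreal_mult mult_ac)
        then show ?thesis using 2 unfolding \<Phi>_def K_def by (auto simp: indicator_def)
      next
        case 3
        then show ?thesis using t unfolding \<Phi>_def by (auto simp: indicator_def mult.commute)
      qed
    qed
    have m3: "(\<lambda>h. indicator {0..t} h * ennreal (exp (- (?Q + \<gamma> * ?c) * h)) * ?E h) \<in> borel_measurable lborel"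
      by measurable
    show "(\<integral>\<^sup>+h. indicator {0..} h * ennreal (exp (- ?Q * h)) * \<Phi> (?y, h, ?fl) \<partial>lborel) =
        ennreal ?A * ennreal (exp (- ?Q * t) / ?Q) + ennreal (vv ^ (if ?fl then 1 else 0)) * (\<integral>\<^sup>+h. indicator {0..t} h * ennreal (exp (- (?Q + \<gamma> * ?c) * h)) * ?E h \<partial>lborel)"
      unfolding pt
      apply (subst nn_integral_add)
        apply measurable
      using m3 apply measurable
      apply (subst nn_integral_cmult, measurable)
      apply (subst nn_integral_cmult, use m3 in measurable)
      using exp_integral_tail[OF Q t] by simp
  qed
  also have "\<dots> = ennreal (?A * exp (- ?Q * t))
    + (\<Sum>i<5. ennreal (fst (anc_moves r x ! i) * vv ^ (if snd (snd (anc_moves r x ! i)) then 1 else 0))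
        * (\<integral>\<^sup>+h. indicator {0..t} h * ennreal (exp (- (?Q + \<gamma> * ?c) * h))
            * EE r vv \<gamma> fs (fst (snd (anc_moves r x ! i))) (t - h) \<partial>lborel))"
  proof -
    have rt: "\<And>i. i < 5 \<Longrightarrow> 0 \<le> fst (anc_moves r x ! i)" using rate_nonneg[OF r] by blast
    define E where "E = exp (- ?Q * t) / ?Q"
    have E0: "0 \<le> E" unfolding E_def using Q by simp
    have "(\<Sum>i<5. ennreal (fst (anc_moves r x ! i)) * (ennreal ?A * ennreal E))
        = (\<Sum>i<5. ennreal (fst (anc_moves r x ! i))) * (ennreal ?A * ennreal E)"
      by (simp add: sum_distrib_right)
    also have "(\<Sum>i<5. ennreal (fst (anc_moves r x ! i))) = ennreal ?Q"
      using rt by (subst sum_ennreal) (auto simp: anc_total_rate_def)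
    also have "ennreal ?Q * (ennreal ?A * ennreal E) = ennreal (?Q * (?A * E))"
      using Q A0 E0 by (simp add: ennreal_mult)
    also have "?Q * (?A * E) = ?A * exp (- ?Q * t)" unfolding E_def using Q by simp
    finally have s1: "(\<Sum>i<5. ennreal (fst (anc_moves r x ! i)) * (ennreal ?A * ennreal (exp (- ?Q * t) / ?Q))) = ennreal (?A * exp (- ?Q * t))"
      unfolding E_def .
    show ?thesis
      unfolding distrib_left sum.distrib s1
      using rt vv by (auto intro!: sum.cong simp: ennreal_mult mult.assoc)
  qed
  finally show ?thesis by (simp add: mult.assoc)
qed

end

lemma step_Q0: "anc_total_rate r x \<le> 0 \<Longrightarrow> anc_step r x z = (x, snd z, False)"
  by (cases z) (simp add: anc_step_def)

lemma path_Q0: "anc_total_rate r x \<le> 0 \<Longrightarrow> anc_path r x \<omega> k = x"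
  by (induction k) (auto simp: step_Q0)

lemma EE_const:
  assumes Q: "anc_total_rate r x \<le> 0" and t: "0 \<le> t"
  shows "EE r vv \<gamma> fs x t = ennreal (fs x * exp (- \<gamma> * (real (snd (snd x)) * t)))"
proof -
  have ch: "anc_chain r x \<omega> u = x" for \<omega> u unfolding anc_chain_def using path_Q0[OF Q] by simp
  have s: "anc_s r x \<omega> u = 0" for \<omega> u
    unfolding anc_s_def anc_recomb_def using path_Q0[OF Q] step_Q0[OF Q] by simp
  have I: "Iint r x \<omega> t = ennreal (real (snd (snd x)) * t)" for \<omega>
    by (rule Iint_const) (use ch t in \<open>auto simp: anc_c_def\<close>)
  have "EE r vv \<gamma> fs x t = (\<integral>\<^sup>+\<omega>. ennreal (fs x * exp (- \<gamma> * (real (snd (snd x)) * t))) \<partial>anc_Omega)"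
    unfolding EE_def Fg_alt ch s I using t by simp
  then show ?thesis by (simp add: Om.emeasure_space_1)
qed

lemma moves_snd:
  assumes "i < 5"
  shows "snd (anc_moves r x ! i) = snd (anc_moves r' x ! i)"
proof -
  obtain a b c where x: "x = (a, b, c)" by (cases x) auto
  from assms have "i = 0 \<or> i = 1 \<or> i = 2 \<or> i = 3 \<or> i = 4" by auto
  then show ?thesis by (auto simp: x anc_moves_def)
qed

lemma moves_rate_v:
  assumes "i < 5"
  shows "fst (anc_moves (v * r) x ! i) = fst (anc_moves r x ! i) * v ^ (if snd (snd (anc_moves r x ! i)) then 1 else 0)"
proof -
  obtain a b c where x: "x = (a, b, c)" by (cases x) auto
  from assms have "i = 0 \<or> i = 1 \<or> i = 2 \<or> i = 3 \<or> i = 4" by auto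
  then show ?thesis by (auto simp: x anc_moves_def)
qed

lemma Bstep:
  assumes r': "0 \<le> r'" "r' \<le> r" and Q: "0 < anc_total_rate r x"
  shows "(\<Sum>i<5. ennreal (fst (anc_moves r' x ! i)) * (\<integral>\<^sup>+h. indicator {0..t} h * ennreal (exp (- anc_total_rate r x * h))
       * ennreal ((3/4)^n * exp (beta r * (t - h)) * wt (fst (snd (anc_moves r' x ! i)))) \<partial>lborel))
     \<le> ennreal ((3/4)^(Suc n) * exp (beta r * t) * wt x)"
proof -
  have r: "0 \<le> r" using r' by simp
  let ?Q = "anc_total_rate r x"
  define D where "D = ?Q + beta r"
  have D: "0 < D" using Q beta_ge1[OF r] unfolding D_def by simp
  have rt: "\<And>i. i < 5 \<Longrightarrow> 0 \<le> fst (anc_moves r' x ! i)" using rate_nonneg[OF r'(1)] by blast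
  have "(\<Sum>i<5. ennreal (fst (anc_moves r' x ! i)) * (\<integral>\<^sup>+h. indicator {0..t} h * ennreal (exp (- ?Q * h))
       * ennreal ((3/4)^n * exp (beta r * (t - h)) * wt (fst (snd (anc_moves r' x ! i)))) \<partial>lborel))
     \<le> (\<Sum>i<5. ennreal (fst (anc_moves r' x ! i)) * (\<integral>\<^sup>+h. indicator {0..} h * ennreal (exp (- ?Q * h))
       * ennreal (((3/4)^n * wt (fst (snd (anc_moves r' x ! i)))) * exp (beta r * (t - h))) \<partial>lborel))"
    by (intro sum_mono mult_left_mono nn_integral_mono) (auto simp: indicator_def mult_ac)
  also have "\<dots> = (\<Sum>i<5. ennreal (fst (anc_moves r' x ! i) * ((3/4)^n * wt (fst (snd (anc_moves r' x ! i))) * exp (beta r * t) / D)))"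
  proof (intro sum.cong refl)
    fix i :: nat assume i: "i \<in> {..<5}"
    have "(\<integral>\<^sup>+h. indicator {0..} h * ennreal (exp (- ?Q * h))
      * ennreal (((3/4)^n * wt (fst (snd (anc_moves r' x ! i)))) * exp (beta r * (t - h))) \<partial>lborel)
      = ennreal ((3/4)^n * wt (fst (snd (anc_moves r' x ! i))) * exp (beta r * t) / D)"
      unfolding D_def by (rule EW) (use D in \<open>auto simp: D_def\<close>)
    then show "ennreal (fst (anc_moves r' x ! i)) * (\<integral>\<^sup>+h. indicator {0..} h * ennreal (exp (- ?Q * h))
      * ennreal (((3/4)^n * wt (fst (snd (anc_moves r' x ! i)))) * exp (beta r * (t - h))) \<partial>lborel)
      = ennreal (fst (anc_moves r' x ! i) * ((3/4)^n * wt (fst (snd (anc_moves r' x ! i))) * exp (beta r * t) / D))"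
      using rt[of i] i D by (simp add: ennreal_mult[symmetric])
  qed
  also have "\<dots> = ennreal (\<Sum>i<5. fst (anc_moves r' x ! i) * ((3/4)^n * wt (fst (snd (anc_moves r' x ! i))) * exp (beta r * t) / D))"
    using rt D by (intro sum_ennreal) (auto intro!: mult_nonneg_nonneg divide_nonneg_pos)
  also have "\<dots> \<le> ennreal ((3/4)^(Suc n) * exp (beta r * t) * wt x)"
  proof (rule ennreal_leI)
    have "(\<Sum>i<5. fst (anc_moves r' x ! i) * ((3/4)^n * wt (fst (snd (anc_moves r' x ! i))) * exp (beta r * t) / D))
      = ((3/4)^n * exp (beta r * t) / D) * (\<Sum>i<5. fst (anc_moves r' x ! i) * wt (fst (snd (anc_moves r' x ! i))))"
      by (simp add: sum_distrib_left sum_divide_distrib mult_ac)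
    also have "\<dots> \<le> ((3/4)^n * exp (beta r * t) / D) * (3/4 * D * wt x)"
      using key_ineq[OF r', of x] D
      by (intro mult_left_mono) (auto simp: beta_def D_def)
    also have "\<dots> = (3/4)^(Suc n) * exp (beta r * t) * wt x"
      using D by (simp add: field_simps)
    finally show "(\<Sum>i<5. fst (anc_moves r' x ! i) * ((3/4)^n * wt (fst (snd (anc_moves r' x ! i))) * exp (beta r * t) / D))
      \<le> (3/4)^(Suc n) * exp (beta r * t) * wt x" .
  qed
  finally show ?thesis .
qed

lemma rec_compare:
  fixes F G B :: "anc_state \<Rightarrow> real \<Rightarrow> ennreal"
  assumes F: "F x t = A + (\<Sum>i<5. w i * (\<integral>\<^sup>+h. indicator {0..t} h * ennreal (exp (- Q * h)) * F (y i) (t - h) \<partial>lborel))"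
    and G: "G x t = A + (\<Sum>i<5. w i * (\<integral>\<^sup>+h. indicator {0..t} h * ennreal (exp (- Q * h)) * G (y i) (t - h) \<partial>lborel))"
    and IH: "\<And>y s. 0 \<le> s \<Longrightarrow> F y s \<le> G y s + B y s"
    and Gm: "\<And>y. (\<lambda>s. G y s) \<in> borel_measurable borel"
    and Bm: "\<And>y. (\<lambda>s. B y s) \<in> borel_measurable borel"
  shows "F x t \<le> G x t + (\<Sum>i<5. w i * (\<integral>\<^sup>+h. indicator {0..t} h * ennreal (exp (- Q * h)) * B (y i) (t - h) \<partial>lborel))"
proof -
  have pw: "indicator {0..t} h * ennreal (exp (- Q * h)) * F (y i) (t - h)
       \<le> indicator {0..t} h * ennreal (exp (- Q * h)) * (G (y i) (t - h) + B (y i) (t - h))" for i h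
    by (cases "h \<in> {0..t}") (auto intro!: mult_left_mono IH)
  have "F x t \<le> A + (\<Sum>i<5. w i * (\<integral>\<^sup>+h. indicator {0..t} h * ennreal (exp (- Q * h)) * (G (y i) (t - h) + B (y i) (t - h)) \<partial>lborel))"
    unfolding F
    apply (rule add_mono[OF order_refl])
    apply (rule sum_mono)
    apply (rule mult_left_mono[OF nn_integral_mono])
     apply (rule pw)
    apply simp
    done
  also have "\<dots> = A + (\<Sum>i<5. w i * ((\<integral>\<^sup>+h. indicator {0..t} h * ennreal (exp (- Q * h)) * G (y i) (t - h) \<partial>lborel)
      + (\<integral>\<^sup>+h. indicator {0..t} h * ennreal (exp (- Q * h)) * B (y i) (t - h) \<partial>lborel)))"
  proof -
    have eqi: "(\<integral>\<^sup>+h. indicator {0..t} h * ennreal (exp (- Q * h)) * (G (y i) (t - h) + B (y i) (t - h)) \<partial>lborel)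
      = (\<integral>\<^sup>+h. indicator {0..t} h * ennreal (exp (- Q * h)) * G (y i) (t - h) \<partial>lborel)
      + (\<integral>\<^sup>+h. indicator {0..t} h * ennreal (exp (- Q * h)) * B (y i) (t - h) \<partial>lborel)" for i
    proof -
      have m1[measurable]: "(\<lambda>h. G (y i) (t - h)) \<in> borel_measurable borel"
        using measurable_compose[OF _ Gm[of "y i"], of "\<lambda>h. t - h" borel] by simp
      have m2[measurable]: "(\<lambda>h. B (y i) (t - h)) \<in> borel_measurable borel"
        using measurable_compose[OF _ Bm[of "y i"], of "\<lambda>h. t - h" borel] by simp
      show ?thesis unfolding distrib_left by (intro nn_integral_add) measurable
    qed
    show ?thesis by (simp only: eqi)
  qed
  also have "\<dots> = G x t + (\<Sum>i<5. w i * (\<integral>\<^sup>+h. indicator {0..t} h * ennreal (exp (- Q * h)) * B (y i) (t - h) \<partial>lborel))"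
    unfolding G distrib_left sum.distrib by (simp add: add.assoc)
  finally show ?thesis .
qed

context
  fixes \<rho> v :: real and fs :: "anc_state \<Rightarrow> real"
  assumes \<rho>: "0 < \<rho>" and v0: "0 \<le> v" and v1: "v \<le> 1" and fs0: "\<And>y. 0 \<le> fs y" and fs1: "\<And>y. fs y \<le> 1"
begin

definition "al = \<rho> * (1 - v) / 2"

lemma al0: "0 \<le> al" unfolding al_def using \<rho> v1 by simp

lemma Qrel: "anc_total_rate \<rho> x = anc_total_rate (v * \<rho>) x + al * real (snd (snd x))"
  by (cases x) (simp add: total_rate_formula al_def field_simps)

lemma vr0: "0 \<le> v * \<rho>" using v0 \<rho> by simp
lemma vr1: "v * \<rho> \<le> \<rho>" using v1 \<rho> by (simp add: mult_left_le_one_le)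

lemma EL_form:
  assumes Q: "0 < anc_total_rate \<rho> x" and t: "0 \<le> t"
  shows "EE \<rho> v 0 fs x t = ennreal (fs x * exp (- anc_total_rate \<rho> x * t))
    + (\<Sum>i<5. ennreal (fst (anc_moves (v * \<rho>) x ! i)) * (\<integral>\<^sup>+h. indicator {0..t} h * ennreal (exp (- anc_total_rate \<rho> x * h))
        * EE \<rho> v 0 fs (fst (snd (anc_moves (v * \<rho>) x ! i))) (t - h) \<partial>lborel))"
proof -
  have "EE \<rho> v 0 fs x t = ennreal (fs x * exp (- 0 * (real (snd (snd x)) * t)) * exp (- anc_total_rate \<rho> x * t))
    + (\<Sum>i<5. ennreal (fst (anc_moves \<rho> x ! i) * v ^ (if snd (snd (anc_moves \<rho> x ! i)) then 1 else 0))
        * (\<integral>\<^sup>+h. indicator {0..t} h * ennreal (exp (- (anc_total_rate \<rho> x + 0 * real (snd (snd x))) * h))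
            * EE \<rho> v 0 fs (fst (snd (anc_moves \<rho> x ! i))) (t - h) \<partial>lborel))"
    by (rule EE_rec) (use \<rho> v0 fs0 Q t in auto)
  also have "\<dots> = ennreal (fs x * exp (- anc_total_rate \<rho> x * t))
    + (\<Sum>i<5. ennreal (fst (anc_moves (v * \<rho>) x ! i)) * (\<integral>\<^sup>+h. indicator {0..t} h * ennreal (exp (- anc_total_rate \<rho> x * h))
        * EE \<rho> v 0 fs (fst (snd (anc_moves (v * \<rho>) x ! i))) (t - h) \<partial>lborel))"
  proof (intro arg_cong2[where f="(+)"] sum.cong refl)
    fix i :: nat assume "i \<in> {..<5}"
    then have i: "i < 5" by simp
    show "ennreal (fst (anc_moves \<rho> x ! i) * v ^ (if snd (snd (anc_moves \<rho> x ! i)) then 1 else 0))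
        * (\<integral>\<^sup>+h. indicator {0..t} h * ennreal (exp (- (anc_total_rate \<rho> x + 0 * real (snd (snd x))) * h))
            * EE \<rho> v 0 fs (fst (snd (anc_moves \<rho> x ! i))) (t - h) \<partial>lborel)
      = ennreal (fst (anc_moves (v * \<rho>) x ! i)) * (\<integral>\<^sup>+h. indicator {0..t} h * ennreal (exp (- anc_total_rate \<rho> x * h))
        * EE \<rho> v 0 fs (fst (snd (anc_moves (v * \<rho>) x ! i))) (t - h) \<partial>lborel)"
      using moves_rate_v[OF i, of v \<rho> x] moves_snd[OF i, of \<rho> x "v * \<rho>"] by simp
  qed simp
  finally show ?thesis .
qed

lemma ER_form:
  assumes Q: "0 < anc_total_rate (v * \<rho>) x" and t: "0 \<le> t"
  shows "EE (v * \<rho>) 1 al fs x t = ennreal (fs x * exp (- anc_total_rate \<rho> x * t))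
    + (\<Sum>i<5. ennreal (fst (anc_moves (v * \<rho>) x ! i)) * (\<integral>\<^sup>+h. indicator {0..t} h * ennreal (exp (- anc_total_rate \<rho> x * h))
        * EE (v * \<rho>) 1 al fs (fst (snd (anc_moves (v * \<rho>) x ! i))) (t - h) \<partial>lborel))"
proof -
  have "EE (v * \<rho>) 1 al fs x t = ennreal (fs x * exp (- al * (real (snd (snd x)) * t)) * exp (- anc_total_rate (v * \<rho>) x * t))
    + (\<Sum>i<5. ennreal (fst (anc_moves (v * \<rho>) x ! i) * 1 ^ (if snd (snd (anc_moves (v * \<rho>) x ! i)) then 1 else 0))
        * (\<integral>\<^sup>+h. indicator {0..t} h * ennreal (exp (- (anc_total_rate (v * \<rho>) x + al * real (snd (snd x))) * h))
            * EE (v * \<rho>) 1 al fs (fst (snd (anc_moves (v * \<rho>) x ! i))) (t - h) \<partial>lborel))"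
    by (rule EE_rec) (use vr0 al0 fs0 Q t in auto)
  also have "\<dots> = ennreal (fs x * exp (- anc_total_rate \<rho> x * t))
    + (\<Sum>i<5. ennreal (fst (anc_moves (v * \<rho>) x ! i)) * (\<integral>\<^sup>+h. indicator {0..t} h * ennreal (exp (- anc_total_rate \<rho> x * h))
        * EE (v * \<rho>) 1 al fs (fst (snd (anc_moves (v * \<rho>) x ! i))) (t - h) \<partial>lborel))"
  proof -
    have e1: "exp (- al * (real (snd (snd x)) * t)) * exp (- anc_total_rate (v * \<rho>) x * t) = exp (- anc_total_rate \<rho> x * t)"
      unfolding Qrel[of x] by (simp add: exp_add[symmetric] algebra_simps)
    have e2: "anc_total_rate (v * \<rho>) x + al * real (snd (snd x)) = anc_total_rate \<rho> x"
      unfolding Qrel[of x] ..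
    show ?thesis unfolding e2 mult.assoc[of "fs x"] e1 by simp
  qed
  finally show ?thesis .
qed

definition "Bn n x t = ennreal ((3/4)^n * exp (beta \<rho> * t) * wt x)"

lemma Bn_meas[measurable]: "(\<lambda>s. Bn n x s) \<in> borel_measurable borel"
  unfolding Bn_def by measurable

lemma eq_case:
  assumes Q': "anc_total_rate (v * \<rho>) x \<le> 0" and t: "0 \<le> t"
  shows "EE \<rho> v 0 fs x t = EE (v * \<rho>) 1 al fs x t"
proof -
  have ER: "EE (v * \<rho>) 1 al fs x t = ennreal (fs x * exp (- al * (real (snd (snd x)) * t)))"
    by (rule EE_const[OF Q' t])
  have Q'0: "anc_total_rate (v * \<rho>) x = 0" using total_rate_nonneg[OF vr0, of x] Q' by linarith
  show ?thesis
  proof (cases "0 < anc_total_rate \<rho> x")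
    case True
    have z: "fst (anc_moves (v * \<rho>) x ! i) = 0" if "i < 5" for i
    proof -
      have "(\<Sum>j<5. fst (anc_moves (v * \<rho>) x ! j)) = 0" using Q'0 by (simp add: anc_total_rate_def)
      then have "\<forall>j\<in>{..<5}. fst (anc_moves (v * \<rho>) x ! j) = 0"
        using rate_nonneg[OF vr0] by (subst (asm) sum_nonneg_eq_0_iff) auto
      then show ?thesis using that by simp
    qed
    have "EE \<rho> v 0 fs x t = ennreal (fs x * exp (- anc_total_rate \<rho> x * t))"
      using EL_form[OF True t] z by simp
    moreover have "anc_total_rate \<rho> x = al * real (snd (snd x))" using Qrel[of x] Q'0 by simp
    ultimately show ?thesis using ER by (simp add: mult_ac)
  next
    case False
    then have Q0: "anc_total_rate \<rho> x \<le> 0" by simp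
    have EL: "EE \<rho> v 0 fs x t = ennreal (fs x * exp (- 0 * (real (snd (snd x)) * t)))"
      by (rule EE_const[OF Q0 t])
    have "0 \<le> al * real (snd (snd x))" using al0 by simp
    then have "al * real (snd (snd x)) = 0" using Qrel[of x] Q'0 Q0 by linarith
    then have h0: "al * (real (snd (snd x)) * t) = 0" by (metis mult.assoc mult_zero_left)
    show ?thesis using EL ER h0 by simp
  qed
qed

lemma compare_n:
  "0 \<le> t \<Longrightarrow> EE \<rho> v 0 fs x t \<le> EE (v * \<rho>) 1 al fs x t + Bn n x t \<and> EE (v * \<rho>) 1 al fs x t \<le> EE \<rho> v 0 fs x t + Bn n x t"
proof (induction n arbitrary: x t)
  case 0
  have L1: "EE \<rho> v 0 fs x t \<le> 1" by (rule EE_le1) (use fs0 fs1 v0 v1 in auto)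
  have R1: "EE (v * \<rho>) 1 al fs x t \<le> 1" by (rule EE_le1) (use fs0 fs1 al0 in auto)
  have "1 \<le> Bn 0 x t"
  proof -
    have "1 \<le> exp (beta \<rho> * t)" using 0 beta_ge1[of \<rho>] \<rho> by simp
    then have "1 * 1 \<le> exp (beta \<rho> * t) * wt x" using wt_ge1[of x] by (intro mult_mono) auto
    then show ?thesis unfolding Bn_def by (simp add: ennreal_1[symmetric] del: ennreal_1)
  qed
  then show ?case using L1 R1 by (auto intro: order_trans add_increasing)
next
  case (Suc n)
  show ?case
  proof (cases "0 < anc_total_rate (v * \<rho>) x")
    case True
    have Q: "0 < anc_total_rate \<rho> x" using Qrel[of x] True al0 by (smt (verit) mult_nonneg_nonneg of_nat_0_le_iff)
    let ?w = "\<lambda>i. ennreal (fst (anc_moves (v * \<rho>) x ! i))"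
    let ?y = "\<lambda>i. fst (snd (anc_moves (v * \<rho>) x ! i))"
    let ?Q = "anc_total_rate \<rho> x"
    have BS: "(\<Sum>i<5. ?w i * (\<integral>\<^sup>+h. indicator {0..t} h * ennreal (exp (- ?Q * h)) * Bn n (?y i) (t - h) \<partial>lborel))
       \<le> Bn (Suc n) x t"
      using Bstep[OF vr0 vr1 Q, of t n] unfolding Bn_def by simp
    have IH1: "\<And>y s. 0 \<le> s \<Longrightarrow> EE \<rho> v 0 fs y s \<le> EE (v * \<rho>) 1 al fs y s + Bn n y s" using Suc.IH by blast
    have IH2: "\<And>y s. 0 \<le> s \<Longrightarrow> EE (v * \<rho>) 1 al fs y s \<le> EE \<rho> v 0 fs y s + Bn n y s" using Suc.IH by blast
    have a: "EE \<rho> v 0 fs x t \<le> EE (v * \<rho>) 1 al fs x t + (\<Sum>i<5. ?w i * (\<integral>\<^sup>+h. indicator {0..t} h * ennreal (exp (- ?Q * h)) * Bn n (?y i) (t - h) \<partial>lborel))"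
      by (rule rec_compare[OF EL_form[OF Q Suc.prems] ER_form[OF True Suc.prems] IH1]) measurable
    have b: "EE (v * \<rho>) 1 al fs x t \<le> EE \<rho> v 0 fs x t + (\<Sum>i<5. ?w i * (\<integral>\<^sup>+h. indicator {0..t} h * ennreal (exp (- ?Q * h)) * Bn n (?y i) (t - h) \<partial>lborel))"
      by (rule rec_compare[OF ER_form[OF True Suc.prems] EL_form[OF Q Suc.prems] IH2]) measurable
    show ?thesis using a b BS by (meson add_left_mono order_trans)
  next
    case False
    then have "EE \<rho> v 0 fs x t = EE (v * \<rho>) 1 al fs x t" using eq_case Suc.prems by simp
    then show ?thesis by (simp add: add_increasing2)
  qed
qed

lemma EL_eq_ER:
  assumes t: "0 \<le> t"
  shows "EE \<rho> v 0 fs x t = EE (v * \<rho>) 1 al fs x t"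
proof -
  have lim: "(\<lambda>n. Bn n x t) \<longlonglongrightarrow> 0"
  proof -
    have "(\<lambda>n. (3/4::real)^n * (exp (beta \<rho> * t) * wt x)) \<longlonglongrightarrow> 0 * (exp (beta \<rho> * t) * wt x)"
      by (intro tendsto_mult tendsto_const LIMSEQ_power_zero) auto
    then have "(\<lambda>n. ennreal ((3/4::real)^n * (exp (beta \<rho> * t) * wt x))) \<longlonglongrightarrow> ennreal 0"
      by (intro tendsto_ennrealI) simp
    then show ?thesis unfolding Bn_def by (simp add: mult.assoc)
  qed
  have l1: "(\<lambda>n. EE (v * \<rho>) 1 al fs x t + Bn n x t) \<longlonglongrightarrow> EE (v * \<rho>) 1 al fs x t + 0"
    by (intro tendsto_add tendsto_const lim)
  have l2: "(\<lambda>n. EE \<rho> v 0 fs x t + Bn n x t) \<longlonglongrightarrow> EE \<rho> v 0 fs x t + 0"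
    by (intro tendsto_add tendsto_const lim)
  have "EE \<rho> v 0 fs x t \<le> EE (v * \<rho>) 1 al fs x t + 0"
    by (rule LIMSEQ_le_const[OF l1]) (use compare_n[OF t] in auto)
  moreover have "EE (v * \<rho>) 1 al fs x t \<le> EE \<rho> v 0 fs x t + 0"
    by (rule LIMSEQ_le_const[OF l2]) (use compare_n[OF t] in auto)
  ultimately show ?thesis by simp
qed

end

theorem lemma5p1:
  fixes \<rho> v t p q g :: real and l m n :: nat
  assumes "\<rho> > 0" and "0 \<le> v" and "v \<le> 1"
    and "(l, m, n) \<noteq> (0, 0, 0)" and "t \<ge> 0"
    and "0 \<le> p" and "p \<le> 1" and "0 \<le> q" and "q \<le> 1" and "0 \<le> g" and "g \<le> 1"
  shows "(\<integral>\<omega>. p ^ anc_a \<rho> (l, m, n) \<omega> t * q ^ anc_b \<rho> (l, m, n) \<omega> t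
               * g ^ anc_c \<rho> (l, m, n) \<omega> t * v ^ anc_s \<rho> (l, m, n) \<omega> t \<partial>anc_Omega)
       = (\<integral>\<omega>. p ^ anc_a (v * \<rho>) (l, m, n) \<omega> t * q ^ anc_b (v * \<rho>) (l, m, n) \<omega> t
               * g ^ anc_c (v * \<rho>) (l, m, n) \<omega> t
               * exp (- (\<rho> * (1 - v) / 2) *
                      (LINT u:{0..t}|lborel. real (anc_c (v * \<rho>) (l, m, n) \<omega> u))) \<partial>anc_Omega)"
proof -
  define fs :: "anc_state \<Rightarrow> real" where "fs y = p ^ fst y * q ^ fst (snd y) * g ^ snd (snd y)" for y
  have fs0: "0 \<le> fs y" for y unfolding fs_def using assms by simp
  have fs1: "fs y \<le> 1" for y unfolding fs_def using assms
    by (intro mult_le_one power_le_one) (auto intro: mult_nonneg_nonneg)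
  have L: "(\<integral>\<omega>. p ^ anc_a \<rho> (l, m, n) \<omega> t * q ^ anc_b \<rho> (l, m, n) \<omega> t
               * g ^ anc_c \<rho> (l, m, n) \<omega> t * v ^ anc_s \<rho> (l, m, n) \<omega> t \<partial>anc_Omega)
     = (\<integral>\<omega>. Fg \<rho> v 0 fs (l, m, n) \<omega> t \<partial>anc_Omega)"
    by (intro Bochner_Integration.integral_cong) (simp_all add: Fg_def fs_def anc_a_def anc_b_def anc_c_def)
  have R: "(\<integral>\<omega>. p ^ anc_a (v * \<rho>) (l, m, n) \<omega> t * q ^ anc_b (v * \<rho>) (l, m, n) \<omega> t
               * g ^ anc_c (v * \<rho>) (l, m, n) \<omega> t
               * exp (- (\<rho> * (1 - v) / 2) *
                      (LINT u:{0..t}|lborel. real (anc_c (v * \<rho>) (l, m, n) \<omega> u))) \<partial>anc_Omega)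
     = (\<integral>\<omega>. Fg (v * \<rho>) 1 (al \<rho> v) fs (l, m, n) \<omega> t \<partial>anc_Omega)"
    by (intro Bochner_Integration.integral_cong)
      (simp_all add: Fg_def fs_def al_def[OF assms(1,2,3) fs0 fs1] anc_a_def anc_b_def anc_c_def)
  have "(\<integral>\<omega>. Fg \<rho> v 0 fs (l, m, n) \<omega> t \<partial>anc_Omega) = enn2real (EE \<rho> v 0 fs (l, m, n) t)"
    unfolding EE_def by (rule integral_eq_nn_integral) (use Fg_nonneg[OF fs0 assms(2)] in auto)
  also have "EE \<rho> v 0 fs (l, m, n) t = EE (v * \<rho>) 1 (al \<rho> v) fs (l, m, n) t"
    by (rule EL_eq_ER) (use assms fs0 fs1 in auto)
  also have "enn2real (EE (v * \<rho>) 1 (al \<rho> v) fs (l, m, n) t) = (\<integral>\<omega>. Fg (v * \<rho>) 1 (al \<rho> v) fs (l, m, n) \<omega> t \<partial>anc_Omega)"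
    unfolding EE_def by (rule integral_eq_nn_integral[symmetric]) (use Fg_nonneg[OF fs0, of 1] in auto)
  finally show ?thesis using L R by simp
qed

end
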